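(* Let $\omega$ be uniformly distributed on $\{0,1\}^{[n]}$, $[n]=\{1,\dots,n\}$. For $\lambda\in(0,1)$ let $\ell_\lambda:=\lfloor n^\lambda\rfloor$ and $m_\lambda:=\lfloor n/\ell_\lambda\rfloor$, partition the first $m_\lambda\ell_\lambda$ coordinates into consecutive blocks ("tribes") of length $\ell_\lambda$, let $S_j$ be the sum of the coordinates of $\omega$ in the $j$th tribe, and $S^\lambda:=\max_{1\le j\le m_\lambda}S_j$. For $\beta\in(0,1)$ let $q_{\lambda,\beta}$ be any $\beta$-quantile of $S^\lambda$, and $f_{\lambda,\beta}:=\mathbbm{1}_{\{S^\lambda>q_{\lambda,\beta}\}}$. Then for every $\lambda,\beta\in(0,1)$, as $n\to\infty$, the sequence $f_{\lambda,\beta}$ is noise sensitive and $\mathbb{P}(f_{\lambda,\beta}=0)\to\beta$.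
   Context: A $\beta$-quantile of a random variable $X$ is any $q$ with $\mathbb{P}(X<q)\le\beta\le\mathbb{P}(X\le q)$. For $\omega$ uniform on $\{0,1\}^n$ and $\varepsilon\in(0,1)$, $\omega^\varepsilon$ is obtained by independently resampling each coordinate (uniformly) with probability $\varepsilon$. A sequence of functions $f_n:\{0,1\}^n\to\{0,1\}$ is noise sensitive if for every $\varepsilon>0$, $\mathbb{E}[f_n(\omega)f_n(\omega^\varepsilon)]-\mathbb{E}[f_n(\omega)]^2\to0$ as $n\to\infty$. *)

theory Defs
  imports Complex_Main "HOL-Library.FuncSet"
begin

text \<open>The discrete cube {0,1}^n, with coordinates indexed by 0..n-1
  (booleans encode the bits; coordinates outside are fixed to undefined).\<close>
definition cube :: "nat \<Rightarrow> (nat \<Rightarrow> bool) set" where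
  "cube n = {0..<n} \<rightarrow>\<^sub>E (UNIV :: bool set)"

definition prob_unif :: "nat \<Rightarrow> ((nat \<Rightarrow> bool) \<Rightarrow> bool) \<Rightarrow> real" where
  "prob_unif n P = real (card {x \<in> cube n. P x}) / 2 ^ n"

definition expect_unif :: "nat \<Rightarrow> ((nat \<Rightarrow> bool) \<Rightarrow> real) \<Rightarrow> real" where
  "expect_unif n g = (\<Sum>x\<in>cube n. g x) / 2 ^ n"

text \<open>Joint law of one coordinate (omega_i, omega^eps_i): omega_i uniform, and with
  probability eps the coordinate is resampled uniformly, otherwise kept.\<close>
definition noise_kernel :: "real \<Rightarrow> bool \<Rightarrow> bool \<Rightarrow> real" where
  "noise_kernel eps a b = (1/2) * ((1 - eps) * (if a = b then 1 else 0) + eps / 2)"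

text \<open>E[f(omega) f(omega^eps)] for f : {0,1}^n -> {0,1}.\<close>
definition noise_corr :: "nat \<Rightarrow> real \<Rightarrow> ((nat \<Rightarrow> bool) \<Rightarrow> bool) \<Rightarrow> real" where
  "noise_corr n eps f =
     (\<Sum>x\<in>cube n. \<Sum>y\<in>cube n.
        (\<Prod>i<n. noise_kernel eps (x i) (y i)) * of_bool (f x) * of_bool (f y))"

definition noise_sensitive :: "(nat \<Rightarrow> (nat \<Rightarrow> bool) \<Rightarrow> bool) \<Rightarrow> bool" where
  "noise_sensitive f \<longleftrightarrow>
     (\<forall>eps. 0 < eps \<and> eps < 1 \<longrightarrow>
        (\<lambda>n. noise_corr n eps (f n) - (expect_unif n (\<lambda>x. of_bool (f n x)))^2) \<longlonglongrightarrow> 0)"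

definition tribe_len :: "real \<Rightarrow> nat \<Rightarrow> nat" where
  "tribe_len lam n = nat \<lfloor>real n powr lam\<rfloor>"

definition tribe_num :: "real \<Rightarrow> nat \<Rightarrow> nat" where
  "tribe_num lam n = n div tribe_len lam n"

text \<open>Sum of the coordinates in the j-th tribe (0-based j), i.e. coordinates j*l..(j+1)*l-1.\<close>
definition tribe_sum :: "real \<Rightarrow> nat \<Rightarrow> (nat \<Rightarrow> bool) \<Rightarrow> nat \<Rightarrow> nat" where
  "tribe_sum lam n x j = card {i \<in> {j * tribe_len lam n ..< (j + 1) * tribe_len lam n}. x i}"

definition tribe_max :: "real \<Rightarrow> nat \<Rightarrow> (nat \<Rightarrow> bool) \<Rightarrow> nat" where
  "tribe_max lam n x = Max (tribe_sum lam n x ` {..<tribe_num lam n})"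

definition is_quantile :: "nat \<Rightarrow> ((nat \<Rightarrow> bool) \<Rightarrow> nat) \<Rightarrow> real \<Rightarrow> real \<Rightarrow> bool" where
  "is_quantile n X beta q \<longleftrightarrow>
     prob_unif n (\<lambda>x. real (X x) < q) \<le> beta \<and> beta \<le> prob_unif n (\<lambda>x. real (X x) \<le> q)"

end

theory Submission
  imports Defs "HOL-Probability.Hoeffding" "HOL-Real_Asymp.Real_Asymp"
begin

definition PE :: "('a::finite \<Rightarrow> real) \<Rightarrow> nat set \<Rightarrow> ((nat \<Rightarrow> 'a) \<Rightarrow> real) \<Rightarrow> real" where
  "PE w I F = (\<Sum>z \<in> PiE I (\<lambda>_. UNIV). (\<Prod>i\<in>I. w (z i)) * F z)"

definition dep :: "((nat \<Rightarrow> 'a) \<Rightarrow> 'b) \<Rightarrow> nat set \<Rightarrow> bool" where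
  "dep F J \<longleftrightarrow> (\<forall>z z'. (\<forall>j\<in>J. z j = z' j) \<longrightarrow> F z = F z')"

lemma PE_empty: "PE w {} F = F (\<lambda>_. undefined)"
  by (simp add: PE_def)

lemma PE_insert:
  assumes "finite I" "i \<notin> I"
  shows "PE w (insert i I) F = (\<Sum>c\<in>UNIV. w c * PE w I (\<lambda>z. F (z(i:=c))))"
proof -
  have "PE w (insert i I) F = (\<Sum>z \<in> (\<lambda>(y, g). g(i := y)) ` (UNIV \<times> PiE I (\<lambda>_. UNIV)).
          (\<Prod>j\<in>insert i I. w (z j)) * F z)"
    unfolding PE_def by (simp add: PiE_insert_eq)
  also have "\<dots> = (\<Sum>(y,g) \<in> UNIV \<times> PiE I (\<lambda>_. UNIV).
          (\<Prod>j\<in>insert i I. w ((g(i:=y)) j)) * F (g(i:=y)))"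
    by (subst sum.reindex) (use inj_combinator[OF assms(2), of "\<lambda>_. UNIV"] in
        \<open>auto simp: case_prod_unfold\<close>)
  also have "\<dots> = (\<Sum>(y,g) \<in> UNIV \<times> PiE I (\<lambda>_. UNIV).
          w y * ((\<Prod>j\<in>I. w (g j)) * F (g(i:=y))))"
  proof (intro sum.cong refl, clarify)
    fix y g
    have "(\<Prod>j\<in>insert i I. w ((g(i:=y)) j)) = w y * (\<Prod>j\<in>I. w ((g(i:=y)) j))"
      using assms by simp
    also have "(\<Prod>j\<in>I. w ((g(i:=y)) j)) = (\<Prod>j\<in>I. w (g j))"
      using assms(2) by (intro prod.cong) auto
    finally show "(\<Prod>j\<in>insert i I. w ((g(i:=y)) j)) * F (g(i:=y)) =
        w y * ((\<Prod>j\<in>I. w (g j)) * F (g(i:=y)))" by simp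
  qed
  also have "\<dots> = (\<Sum>y\<in>UNIV. \<Sum>g\<in>PiE I (\<lambda>_. UNIV). w y * ((\<Prod>j\<in>I. w (g j)) * F (g(i:=y))))"
    by (subst sum.cartesian_product) simp
  also have "\<dots> = (\<Sum>c\<in>UNIV. w c * PE w I (\<lambda>z. F (z(i:=c))))"
    unfolding PE_def by (simp add: sum_distrib_left)
  finally show ?thesis .
qed

lemma PE_cong:
  assumes "\<And>z. z \<in> PiE I (\<lambda>_. UNIV) \<Longrightarrow> F z = G z"
  shows "PE w I F = PE w I G"
  unfolding PE_def using assms by (intro sum.cong) auto

lemma PE_add: "PE w I (\<lambda>z. F z + G z) = PE w I F + PE w I G"
  unfolding PE_def by (simp add: distrib_left sum.distrib)

lemma PE_diff: "PE w I (\<lambda>z. F z - G z) = PE w I F - PE w I G"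
  unfolding PE_def by (simp add: right_diff_distrib sum_subtractf)

lemma PE_cmult: "PE w I (\<lambda>z. c * F z) = c * PE w I F"
  unfolding PE_def by (simp add: sum_distrib_left mult_ac)

lemma PE_sum: "finite A \<Longrightarrow> PE w I (\<lambda>z. \<Sum>a\<in>A. F a z) = (\<Sum>a\<in>A. PE w I (F a))"
  by (induction A rule: finite_induct) (simp_all add: PE_add, simp add: PE_def)

lemma PE_mono:
  assumes "\<And>c. w c \<ge> 0" "\<And>z. z \<in> PiE I (\<lambda>_. UNIV) \<Longrightarrow> F z \<le> G z"
  shows "PE w I F \<le> PE w I G"
  unfolding PE_def using assms by (intro sum_mono mult_left_mono prod_nonneg) auto

lemma PE_const:
  assumes "finite I" "sum w UNIV = 1"
  shows "PE w I (\<lambda>_. k) = k"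
  using assms(1)
proof (induction I rule: finite_induct)
  case empty then show ?case by (simp add: PE_empty)
next
  case (insert i I)
  then show ?case using assms(2) by (simp add: PE_insert sum_distrib_right[symmetric])
qed

lemma dep_mono: "dep F J \<Longrightarrow> J \<subseteq> K \<Longrightarrow> dep F K"
  unfolding dep_def by (meson subsetD)

lemma dep_upd: "dep F J \<Longrightarrow> dep (\<lambda>z. F (z(i:=c))) (J - {i})"
  unfolding dep_def
proof (intro allI impI)
  fix z z' :: "nat \<Rightarrow> 'a"
  assume F: "\<forall>z z'. (\<forall>j\<in>J. z j = z' j) \<longrightarrow> F z = F z'" and h: "\<forall>j\<in>J - {i}. z j = z' j"
  have "\<forall>j\<in>J. (z(i:=c)) j = (z'(i:=c)) j" using h by simp
  then show "F (z(i:=c)) = F (z'(i:=c))" using F by blast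
qed

lemma dep_upd_irr: "dep F J \<Longrightarrow> i \<notin> J \<Longrightarrow> F (z(i:=c)) = F z"
  unfolding dep_def
proof -
  assume F: "\<forall>z z'. (\<forall>j\<in>J. z j = z' j) \<longrightarrow> F z = F z'" and i: "i \<notin> J"
  have "\<forall>j\<in>J. (z(i:=c)) j = z j" using i by auto
  then show ?thesis using F by blast
qed

lemma PE_indep:
  assumes "finite I"
  shows "J \<subseteq> I \<Longrightarrow> dep F J \<Longrightarrow> dep G (I - J) \<Longrightarrow>
         PE w I (\<lambda>z. F z * G z) = PE w J F * PE w (I - J) G"
  using assms
proof (induction I arbitrary: J F G rule: finite_induct)
  case empty
  then show ?case by (simp add: PE_empty)
next
  case (insert i I)
  show ?case
  proof (cases "i \<in> J")
    case True
    have fJ: "finite (J - {i})" using insert by (meson finite_Diff finite_insert finite_subset)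
    have eqJ: "J = insert i (J - {i})" using True by auto
    have G_irr: "G (z(i:=c)) = G z" for z c
    proof -
      have "\<forall>j\<in>insert i I - J. (z(i:=c)) j = z j" using True by auto
      then show ?thesis using insert.prems(3) unfolding dep_def by blast
    qed
    have "PE w (insert i I) (\<lambda>z. F z * G z) =
          (\<Sum>c\<in>UNIV. w c * PE w I (\<lambda>z. F (z(i:=c)) * G z))"
      using insert by (simp add: PE_insert G_irr)
    also have "\<dots> = (\<Sum>c\<in>UNIV. w c * (PE w (J - {i}) (\<lambda>z. F (z(i:=c))) * PE w (I - (J - {i})) G))"
    proof (intro sum.cong refl arg_cong2[where f="(*)"])
      fix c
      show "PE w I (\<lambda>z. F (z(i:=c)) * G z) = PE w (J - {i}) (\<lambda>z. F (z(i:=c))) * PE w (I - (J - {i})) G"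
        apply (rule insert.IH)
        using insert.prems insert.hyps apply auto[1]
        using dep_upd[OF insert.prems(2)] apply simp
        using insert.prems(3) insert.hyps True by (auto intro: dep_mono)
    qed
    also have "I - (J - {i}) = insert i I - J" using True insert.hyps by auto
    also have "(\<Sum>c\<in>UNIV. w c * (PE w (J - {i}) (\<lambda>z. F (z(i:=c))) * PE w (insert i I - J) G)) =
       (\<Sum>c\<in>UNIV. w c * PE w (J - {i}) (\<lambda>z. F (z(i:=c)))) * PE w (insert i I - J) G"
      by (simp add: sum_distrib_right mult.assoc)
    also have "(\<Sum>c\<in>UNIV. w c * PE w (J - {i}) (\<lambda>z. F (z(i:=c)))) = PE w J F"
      by (subst eqJ, subst PE_insert[OF fJ]) auto
    finally show ?thesis .
  next
    case False
    have JI: "J \<subseteq> I" using False insert by auto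
    have F_irr: "F (z(i:=c)) = F z" for z c
      using dep_upd_irr[OF insert.prems(2) False] .
    have fIJ: "finite (I - J)" using insert by simp
    have "PE w (insert i I) (\<lambda>z. F z * G z) =
          (\<Sum>c\<in>UNIV. w c * PE w I (\<lambda>z. F z * G (z(i:=c))))"
      using insert by (simp add: PE_insert F_irr)
    also have "\<dots> = (\<Sum>c\<in>UNIV. w c * (PE w J F * PE w (I - J) (\<lambda>z. G (z(i:=c)))))"
    proof (intro sum.cong refl arg_cong2[where f="(*)"])
      fix c
      have "dep (\<lambda>z. G (z(i:=c))) (insert i I - J - {i})"
        by (rule dep_upd[OF insert.prems(3)])
      moreover have "insert i I - J - {i} = I - J" using insert.hyps by auto
      ultimately show "PE w I (\<lambda>z. F z * G (z(i:=c))) = PE w J F * PE w (I - J) (\<lambda>z. G (z(i:=c)))"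
        using insert.IH[OF JI insert.prems(2)] insert.hyps by auto
    qed
    also have "\<dots> = PE w J F * (\<Sum>c\<in>UNIV. w c * PE w (I - J) (\<lambda>z. G (z(i:=c))))"
      by (simp add: sum_distrib_left mult_ac)
    also have "(\<Sum>c\<in>UNIV. w c * PE w (I - J) (\<lambda>z. G (z(i:=c)))) = PE w (insert i (I - J)) G"
      using insert.hyps by (subst PE_insert[OF fIJ]) auto
    also have "insert i (I - J) = insert i I - J" using False by auto
    finally show ?thesis .
  qed
qed

lemma dep_prod:
  fixes F :: "'j \<Rightarrow> (nat \<Rightarrow> 'a) \<Rightarrow> 'b::comm_monoid_mult"
  assumes "\<And>j. j \<in> A \<Longrightarrow> dep (F j) (B j)" "\<And>j. j \<in> A \<Longrightarrow> B j \<subseteq> K"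
  shows "dep (\<lambda>z. \<Prod>j\<in>A. F j z) K"
  unfolding dep_def
proof (intro allI impI)
  fix z z' :: "nat \<Rightarrow> 'a" assume h: "\<forall>j\<in>K. z j = z' j"
  show "(\<Prod>j\<in>A. F j z) = (\<Prod>j\<in>A. F j z')"
    using assms h unfolding dep_def by (intro prod.cong) blast+
qed

lemma PE_prod_blocks:
  fixes m :: nat and F :: "nat \<Rightarrow> (nat \<Rightarrow> 'a::finite) \<Rightarrow> real"
  assumes w: "sum w UNIV = 1"
  shows "finite I \<Longrightarrow> (\<And>j. j < m \<Longrightarrow> B j \<subseteq> I) \<Longrightarrow>
    (\<And>j j'. j < m \<Longrightarrow> j' < m \<Longrightarrow> j \<noteq> j' \<Longrightarrow> B j \<inter> B j' = {}) \<Longrightarrow>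
    (\<And>j. j < m \<Longrightarrow> dep (F j) (B j)) \<Longrightarrow>
    PE w I (\<lambda>z. \<Prod>j<m. F j z) = (\<Prod>j<m. PE w (B j) (F j))"
proof (induction m arbitrary: I)
  case 0
  then show ?case using PE_const[OF _ w] by simp
next
  case (Suc m)
  have "PE w I (\<lambda>z. \<Prod>j<Suc m. F j z) = PE w I (\<lambda>z. F m z * (\<Prod>j<m. F j z))"
    by (simp add: mult_ac)
  also have "\<dots> = PE w (B m) (F m) * PE w (I - B m) (\<lambda>z. \<Prod>j<m. F j z)"
  proof (rule PE_indep)
    show "dep (\<lambda>z. \<Prod>j<m. F j z) (I - B m)"
    proof (rule dep_prod[where B=B])
      fix j assume j: "j \<in> {..<m}"
      then show "dep (F j) (B j)" using Suc.prems(4) by simp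
      have "B j \<subseteq> I" "B j \<inter> B m = {}" using Suc.prems(2,3) j by auto
      then show "B j \<subseteq> I - B m" by blast
    qed
    show "finite I" by (rule Suc.prems(1))
    show "B m \<subseteq> I" using Suc.prems(2) by simp
    show "dep (F m) (B m)" using Suc.prems(4) by simp
  qed
  also have "PE w (I - B m) (\<lambda>z. \<Prod>j<m. F j z) = (\<Prod>j<m. PE w (B j) (F j))"
  proof (rule Suc.IH)
    show "finite (I - B m)" using Suc.prems(1) by simp
    fix j assume j: "j < m"
    have "B j \<subseteq> I" "B j \<inter> B m = {}" using Suc.prems(2,3) j by auto
    then show "B j \<subseteq> I - B m" by blast
    show "dep (F j) (B j)" using Suc.prems(4) j by simp
  next
    fix j j' assume "j < m" "j' < m" "j \<noteq> j'"
    then show "B j \<inter> B j' = {}" using Suc.prems(3) by simp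
  qed
  finally show ?case by (simp add: mult_ac)
qed

lemma sum_group_fun:
  fixes wa :: "'b::finite \<Rightarrow> real" and \<pi> :: "'b \<Rightarrow> 'a::finite"
  shows "(\<Sum>b\<in>UNIV. wa b * V (\<pi> b)) = (\<Sum>a\<in>UNIV. (\<Sum>b\<in>{b. \<pi> b = a}. wa b) * V a)"
proof -
  have "(\<Sum>b\<in>UNIV. wa b * V (\<pi> b)) = (\<Sum>a\<in>UNIV. \<Sum>b\<in>{x. x \<in> UNIV \<and> \<pi> x = a}. wa b * V (\<pi> b))"
    by (rule sum.group[symmetric]) auto
  also have "\<dots> = (\<Sum>a\<in>UNIV. (\<Sum>b\<in>{b. \<pi> b = a}. wa b) * V a)"
    by (intro sum.cong refl) (auto simp: sum_distrib_right)
  finally show ?thesis .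
qed

lemma PE_proj:
  fixes wa :: "'b::finite \<Rightarrow> real" and wb :: "'a::finite \<Rightarrow> real" and \<pi> :: "'b \<Rightarrow> 'a"
  assumes w: "\<And>a. (\<Sum>b\<in>{b. \<pi> b = a}. wa b) = wb a" and "finite I"
  shows "dep F I \<Longrightarrow> PE wa I (\<lambda>z. F (\<lambda>i. \<pi> (z i))) = PE wb I F"
  using assms(2)
proof (induction I arbitrary: F rule: finite_induct)
  case empty
  then show ?case by (simp add: PE_empty dep_def)
next
  case (insert i I)
  have eq: "(\<lambda>j. \<pi> ((z(i:=b)) j)) = (\<lambda>j. \<pi> (z j))(i := \<pi> b)" for z b
    by auto
  have dI: "dep (\<lambda>x. F (x(i:=a))) I" for a
  proof -
    have eqI: "insert i I - {i} = I" using insert.hyps by auto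
    from dep_upd[OF insert.prems, of i a] show ?thesis by (simp only: eqI)
  qed
  have "PE wa (insert i I) (\<lambda>z. F (\<lambda>i. \<pi> (z i))) =
        (\<Sum>b\<in>UNIV. wa b * PE wa I (\<lambda>z. F (\<lambda>j. \<pi> ((z(i:=b)) j))))"
    by (rule PE_insert[OF insert.hyps])
  also have "\<dots> = (\<Sum>b\<in>UNIV. wa b * PE wa I (\<lambda>z. F ((\<lambda>j. \<pi> (z j))(i := \<pi> b))))"
    by (simp only: eq)
  also have "\<dots> = (\<Sum>b\<in>UNIV. wa b * PE wb I (\<lambda>x. F (x(i := \<pi> b))))"
    by (simp only: insert.IH[OF dI])
  also have "\<dots> = (\<Sum>a\<in>UNIV. wb a * PE wb I (\<lambda>x. F (x(i := a))))"
    by (subst sum_group_fun[where V="\<lambda>a. PE wb I (\<lambda>x. F (x(i := a)))"]) (simp add: w)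
  also have "\<dots> = PE wb (insert i I) F"
    using insert.hyps by (simp add: PE_insert)
  finally show ?case .
qed

lemma sum_UNIV_pair:
  "(\<Sum>c\<in>(UNIV :: ('a::finite \<times> 'b::finite) set). g c) = (\<Sum>a\<in>UNIV. \<Sum>b\<in>UNIV. g (a,b))"
  by (subst UNIV_Times_UNIV[symmetric], subst sum.cartesian_product) simp

lemma PE_sumout:
  fixes w :: "('a::finite \<times> 'b::finite) \<Rightarrow> real"
  assumes I: "finite I" "i \<in> I"
    and k: "\<And>a. (\<Sum>b\<in>UNIV. w (a,b) * \<phi> (a,b)) = \<kappa> * (\<Sum>b\<in>UNIV. w (a,b))"
    and F: "\<And>z a b b'. F (z(i:=(a,b))) = F (z(i:=(a,b')))"
  shows "PE w I (\<lambda>z. F z * \<phi> (z i)) = \<kappa> * PE w I F"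
proof -
  define I' where "I' = I - {i}"
  have I': "finite I'" "i \<notin> I'" "I = insert i I'" using I by (auto simp: I'_def)
  define X where "X a = PE w I' (\<lambda>z. F (z(i:=(a,undefined))))" for a
  have FX: "PE w I' (\<lambda>z. F (z(i:=(a,b)))) = X a" for a b
    unfolding X_def by (intro PE_cong) (simp add: F[of _ a b undefined])
  have "PE w I (\<lambda>z. F z * \<phi> (z i)) = (\<Sum>c\<in>UNIV. w c * PE w I' (\<lambda>z. F (z(i:=c)) * \<phi> c))"
    using I' by (simp add: PE_insert)
  also have "\<dots> = (\<Sum>a\<in>UNIV. \<Sum>b\<in>UNIV. w (a,b) * \<phi> (a,b) * X a)"
  proof -
    have r: "PE w I' (\<lambda>z. F (z(i:=(a,b))) * \<phi> (a,b)) = \<phi> (a,b) * X a" for a b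
      using PE_cmult[of w I' "\<phi> (a,b)" "\<lambda>z. F (z(i:=(a,b)))"] FX[of a b] by (simp add: mult.commute)
    show ?thesis by (subst sum_UNIV_pair) (simp only: r, simp add: mult_ac)
  qed
  also have "\<dots> = (\<Sum>a\<in>UNIV. (\<Sum>b\<in>UNIV. w (a,b) * \<phi> (a,b)) * X a)"
    by (simp add: sum_distrib_right)
  also have "\<dots> = (\<Sum>a\<in>UNIV. \<kappa> * (\<Sum>b\<in>UNIV. w (a,b)) * X a)"
    by (simp only: k)
  also have "\<dots> = \<kappa> * (\<Sum>a\<in>UNIV. \<Sum>b\<in>UNIV. w (a,b) * X a)"
    by (simp add: sum_distrib_left sum_distrib_right mult_ac)
  also have "(\<Sum>a\<in>UNIV. \<Sum>b\<in>UNIV. w (a,b) * X a) = PE w I F"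
    using I' by (simp add: PE_insert sum_UNIV_pair FX)
  finally show ?thesis .
qed

definition bp :: "nat \<Rightarrow> nat \<Rightarrow> real" where
  "bp l k = real (l choose k) / 2 ^ l"

lemma bp_nonneg: "bp l k \<ge> 0" by (simp add: bp_def)

lemma bp_sum: "(\<Sum>k\<le>l. bp l k) = 1"
proof -
  have "(\<Sum>k\<le>l. real (l choose k)) = 2 ^ l"
    using choose_row_sum[of l] by (metis of_nat_numeral of_nat_power of_nat_sum)
  then show ?thesis by (simp add: bp_def sum_divide_distrib[symmetric])
qed

lemma bij_count:
  assumes "finite B"
  shows "bij_betw (\<lambda>z. {i\<in>B. z i}) (PiE B (\<lambda>_. UNIV :: bool set)) (Pow B)"
proof (rule bij_betwI[where g="\<lambda>A. restrict (\<lambda>i. i \<in> A) B"])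
  show "(\<lambda>z. {i \<in> B. z i}) \<in> (B \<rightarrow>\<^sub>E UNIV) \<rightarrow> Pow B" by auto
  show "(\<lambda>A. restrict (\<lambda>i. i \<in> A) B) \<in> Pow B \<rightarrow> B \<rightarrow>\<^sub>E UNIV" by auto
  show "restrict (\<lambda>i. i \<in> {i \<in> B. x i}) B = x" if "x \<in> B \<rightarrow>\<^sub>E UNIV" for x
    using that by (auto simp: restrict_def PiE_def extensional_def fun_eq_iff)
  show "{i \<in> B. restrict (\<lambda>i. i \<in> y) B i} = y" if "y \<in> Pow B" for y
    using that by auto
qed

lemma PE_count:
  assumes B: "finite B"
  shows "PE (\<lambda>_. 1/2) B (\<lambda>z. g (card {i\<in>B. z i})) = (\<Sum>k\<le>card B. bp (card B) k * g k)"
proof -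
  have "PE (\<lambda>_. 1/2) B (\<lambda>z. g (card {i\<in>B. z i})) =
        (\<Sum>z\<in>PiE B (\<lambda>_. UNIV). g (card {i\<in>B. z i})) / 2 ^ card B"
    unfolding PE_def by (simp add: sum_divide_distrib power_one_over)
  also have "(\<Sum>z\<in>PiE B (\<lambda>_. UNIV). g (card {i\<in>B. z i})) = (\<Sum>A\<in>Pow B. g (card A))"
    by (rule sum.reindex_bij_betw[OF bij_count[OF B]])
  also have "\<dots> = (\<Sum>k\<in>{..card B}. \<Sum>A\<in>{x. x \<in> Pow B \<and> card x = k}. g (card A))"
    by (rule sum.group[symmetric]) (use B in \<open>auto intro: card_mono\<close>)
  also have "\<dots> = (\<Sum>k\<le>card B. real (card B choose k) * g k)"
  proof (intro sum.cong refl)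
    fix k
    have "(\<Sum>A\<in>{x. x \<in> Pow B \<and> card x = k}. g (card A)) = (\<Sum>A\<in>{x. x \<subseteq> B \<and> card x = k}. g k)"
      by (intro sum.cong) auto
    also have "\<dots> = real (card B choose k) * g k"
      using n_subsets[OF B, of k] by simp
    finally show "(\<Sum>A\<in>{x. x \<in> Pow B \<and> card x = k}. g (card A)) = real (card B choose k) * g k" .
  qed
  finally show ?thesis by (simp add: bp_def sum_divide_distrib)
qed

definition uw :: "bool \<Rightarrow> real" where "uw = (\<lambda>_. 1/2)"
definition K2 :: "real \<Rightarrow> bool \<times> bool \<Rightarrow> real" where
  "K2 eps = (\<lambda>c. noise_kernel eps (fst c) (snd c))"

definition Gt :: "nat \<Rightarrow> real \<Rightarrow> real" where
  "Gt l x = (\<Sum>k\<in>{k. k \<le> l \<and> x < real k}. bp l k)"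
definition Ge :: "nat \<Rightarrow> real \<Rightarrow> real" where
  "Ge l x = (\<Sum>k\<in>{k. k \<le> l \<and> x \<le> real k}. bp l k)"

lemma UNIV_bool_pair: "(UNIV :: (bool \<times> bool) set) = {(True,True),(True,False),(False,True),(False,False)}"
  by auto

lemma sum_uw: "sum uw UNIV = 1"
  by (simp add: uw_def UNIV_bool)

lemma sum_K2: "sum (K2 eps) UNIV = 1"
  by (simp add: K2_def UNIV_bool_pair noise_kernel_def field_simps)

lemma K2_fst: "(\<Sum>c\<in>{c. fst c = a}. K2 eps c) = uw a"
proof -
  have "{c :: bool \<times> bool. fst c = a} = {(a,True),(a,False)}" by auto
  then show ?thesis by (simp add: K2_def noise_kernel_def uw_def field_simps)
qed

lemma K2_snd: "(\<Sum>c\<in>{c. snd c = a}. K2 eps c) = uw a"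
proof -
  have "{c :: bool \<times> bool. snd c = a} = {(True,a),(False,a)}" by auto
  then show ?thesis by (simp add: K2_def noise_kernel_def uw_def field_simps)
qed

lemma K2_nonneg: "0 \<le> eps \<Longrightarrow> eps \<le> 1 \<Longrightarrow> K2 eps c \<ge> 0"
  by (simp add: K2_def noise_kernel_def)

lemma uw_nonneg: "uw c \<ge> 0" by (simp add: uw_def)

lemma cube_PiE: "cube n = PiE {0..<n} (\<lambda>_. UNIV)"
  by (simp add: cube_def)

lemma prob_unif_PE: "prob_unif n P = PE uw {0..<n} (\<lambda>x. of_bool (P x))"
proof -
  have "PE uw {0..<n} (\<lambda>x. of_bool (P x)) = (\<Sum>x\<in>cube n. (1/2)^n * of_bool (P x))"
    unfolding PE_def cube_PiE by (simp add: uw_def)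
  also have "\<dots> = (1/2)^n * (\<Sum>x\<in>cube n. of_bool (P x))"
    by (simp add: sum_distrib_left)
  also have "(\<Sum>x\<in>cube n. of_bool (P x) :: real) = real (card {x\<in>cube n. P x})"
    by (simp add: cube_def finite_PiE Int_def)
  finally show ?thesis unfolding prob_unif_def by (simp add: power_one_over)
qed

lemma expect_unif_PE: "expect_unif n g = PE uw {0..<n} g"
  unfolding PE_def expect_unif_def cube_PiE
  by (simp add: uw_def sum_divide_distrib power_one_over)

lemma bij_pair:
  "bij_betw (\<lambda>z. (restrict (\<lambda>i. fst (z i)) I, restrict (\<lambda>i. snd (z i)) I))
     (PiE I (\<lambda>_. UNIV :: (bool \<times> bool) set)) (PiE I (\<lambda>_. UNIV) \<times> PiE I (\<lambda>_. UNIV))"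
proof (rule bij_betwI[where g="\<lambda>(x,y). restrict (\<lambda>i. (x i, y i)) I"])
  show "(\<lambda>z. (restrict (\<lambda>i. fst (z i)) I, restrict (\<lambda>i. snd (z i)) I))
     \<in> (I \<rightarrow>\<^sub>E UNIV) \<rightarrow> (I \<rightarrow>\<^sub>E UNIV) \<times> (I \<rightarrow>\<^sub>E UNIV)" by auto
  show "(\<lambda>(x,y). restrict (\<lambda>i. (x i, y i)) I) \<in> (I \<rightarrow>\<^sub>E UNIV) \<times> (I \<rightarrow>\<^sub>E UNIV) \<rightarrow> (I \<rightarrow>\<^sub>E UNIV)"
    by auto
  show "(\<lambda>(x, y). restrict (\<lambda>i. (x i, y i)) I) (restrict (\<lambda>i. fst (z i)) I, restrict (\<lambda>i. snd (z i)) I) = z"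
    if "z \<in> I \<rightarrow>\<^sub>E UNIV" for z
    using that by (auto simp: restrict_def PiE_def extensional_def fun_eq_iff)
  show "(restrict (\<lambda>i. fst ((\<lambda>(x, y). restrict (\<lambda>i. (x i, y i)) I) p i)) I,
         restrict (\<lambda>i. snd ((\<lambda>(x, y). restrict (\<lambda>i. (x i, y i)) I) p i)) I) = p"
    if "p \<in> (I \<rightarrow>\<^sub>E UNIV) \<times> (I \<rightarrow>\<^sub>E UNIV)" for p
    using that by (cases p) (auto simp: restrict_def PiE_def extensional_def fun_eq_iff)
qed

lemma noise_corr_PE:
  assumes d: "dep (\<lambda>x. f x) {0..<n}"
  shows "noise_corr n eps f =
    PE (K2 eps) {0..<n} (\<lambda>z. of_bool (f (\<lambda>i. fst (z i))) * of_bool (f (\<lambda>i. snd (z i))))"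
proof -
  let ?I = "{0..<n}"
  let ?g = "\<lambda>(x,y). (\<Prod>i<n. noise_kernel eps (x i) (y i)) * of_bool (f x) * of_bool (f y)"
  have "noise_corr n eps f = (\<Sum>p\<in>cube n \<times> cube n. ?g p)"
    unfolding noise_corr_def by (simp add: sum.cartesian_product)
  also have "\<dots> = (\<Sum>z\<in>PiE ?I (\<lambda>_. UNIV). ?g (restrict (\<lambda>i. fst (z i)) ?I, restrict (\<lambda>i. snd (z i)) ?I))"
    unfolding cube_PiE by (rule sum.reindex_bij_betw[OF bij_pair, symmetric])
  also have "\<dots> = PE (K2 eps) {0..<n} (\<lambda>z. of_bool (f (\<lambda>i. fst (z i))) * of_bool (f (\<lambda>i. snd (z i))))"
    unfolding PE_def
  proof (intro sum.cong refl)
    fix z :: "nat \<Rightarrow> bool \<times> bool"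
    have f1: "f (restrict (\<lambda>i. fst (z i)) ?I) = f (\<lambda>i. fst (z i))"
      using d unfolding dep_def by (metis restrict_apply')
    have f2: "f (restrict (\<lambda>i. snd (z i)) ?I) = f (\<lambda>i. snd (z i))"
      using d unfolding dep_def by (metis restrict_apply')
    have pr: "(\<Prod>i<n. noise_kernel eps (restrict (\<lambda>i. fst (z i)) ?I i) (restrict (\<lambda>i. snd (z i)) ?I i))
        = (\<Prod>i\<in>?I. K2 eps (z i))"
      by (simp add: K2_def lessThan_atLeast0)
    show "?g (restrict (\<lambda>i. fst (z i)) ?I, restrict (\<lambda>i. snd (z i)) ?I) =
        (\<Prod>i\<in>?I. K2 eps (z i)) * (of_bool (f (\<lambda>i. fst (z i))) * of_bool (f (\<lambda>i. snd (z i))))"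
      using f1 f2 pr by simp
  qed
  finally show ?thesis .
qed

lemma sum_filter_bp: "(\<Sum>k\<le>l. bp l k * of_bool (P k)) = (\<Sum>k\<in>{k. k \<le> l \<and> P k}. bp l k)"
proof -
  have "(\<Sum>k\<in>{k. k \<le> l \<and> P k}. bp l k) = (\<Sum>k\<in>{k\<in>{..l}. P k}. bp l k)"
    by (intro sum.cong) auto
  also have "\<dots> = (\<Sum>k\<le>l. if P k then bp l k else 0)"
    by (rule sum.inter_filter) simp
  finally show ?thesis by (simp add: of_bool_def if_distrib cong: if_cong)
qed

lemma count_gt: "finite B \<Longrightarrow>
  PE uw B (\<lambda>z. of_bool (q < real (card {i\<in>B. z i}))) = Gt (card B) q"
  unfolding uw_def Gt_def by (subst PE_count) (simp_all add: sum_filter_bp)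

lemma count_ge: "finite B \<Longrightarrow>
  PE uw B (\<lambda>z. of_bool (q \<le> real (card {i\<in>B. z i}))) = Ge (card B) q"
  unfolding uw_def Ge_def by (subst PE_count) (simp_all add: sum_filter_bp)

lemma count_le: "finite B \<Longrightarrow>
  PE uw B (\<lambda>z. of_bool (real (card {i\<in>B. z i}) \<le> q)) = 1 - Gt (card B) q"
proof -
  assume B: "finite B"
  have "PE uw B (\<lambda>z. of_bool (real (card {i\<in>B. z i}) \<le> q)) =
        PE uw B (\<lambda>z. 1 - of_bool (q < real (card {i\<in>B. z i})))"
    by (intro PE_cong) auto
  also have "\<dots> = 1 - Gt (card B) q"
    using B by (simp add: PE_diff PE_const sum_uw count_gt)
  finally show ?thesis .
qed

lemma count_lt: "finite B \<Longrightarrow>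
  PE uw B (\<lambda>z. of_bool (real (card {i\<in>B. z i}) < q)) = 1 - Ge (card B) q"
proof -
  assume B: "finite B"
  have "PE uw B (\<lambda>z. of_bool (real (card {i\<in>B. z i}) < q)) =
        PE uw B (\<lambda>z. 1 - of_bool (q \<le> real (card {i\<in>B. z i})))"
    by (intro PE_cong) auto
  also have "\<dots> = 1 - Ge (card B) q"
    using B by (simp add: PE_diff PE_const sum_uw count_ge)
  finally show ?thesis .
qed

lemma dep_set: "dep (\<lambda>z. G {i\<in>B. P (z i)}) B"
  unfolding dep_def by (intro allI impI arg_cong[where f=G] Collect_cong) auto

lemma dep_cnt_fst: "dep (\<lambda>z. g (card {i\<in>B. fst (z i)})) B"
  unfolding dep_def by (intro allI impI arg_cong[where f="\<lambda>S. g (card S)"] Collect_cong) auto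

lemma dep_cnt: "dep (\<lambda>x. g (card {i\<in>B. x i})) B"
  unfolding dep_def by (intro allI impI arg_cong[where f="\<lambda>S. g (card S)"] Collect_cong) auto

lemma PE_K2_fst:
  assumes "finite B"
  shows "PE (K2 eps) B (\<lambda>z. g (card {i\<in>B. fst (z i)})) = PE uw B (\<lambda>x. g (card {i\<in>B. x i}))"
  using PE_proj[where \<pi>=fst and wa="K2 eps" and wb=uw, OF K2_fst assms dep_cnt] by simp

lemma PE_K2_snd:
  assumes "finite B"
  shows "PE (K2 eps) B (\<lambda>z. g (card {i\<in>B. snd (z i)})) = PE uw B (\<lambda>x. g (card {i\<in>B. x i}))"
  using PE_proj[where \<pi>=snd and wa="K2 eps" and wb=uw, OF K2_snd assms dep_cnt] by simp

definition eB :: "real \<Rightarrow> nat set \<Rightarrow> real \<Rightarrow> real" where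
  "eB eps B q = PE (K2 eps) B (\<lambda>z. of_bool (q < real (card {i\<in>B. fst (z i)})) *
                                   of_bool (q < real (card {i\<in>B. snd (z i)})))"

lemma cB:
  assumes "finite B"
  shows "PE (K2 eps) B (\<lambda>z. of_bool (real (card {i\<in>B. fst (z i)}) \<le> q) *
                            of_bool (real (card {i\<in>B. snd (z i)}) \<le> q))
         = 1 - 2 * Gt (card B) q + eB eps B q"
proof -
  let ?hx = "\<lambda>z. of_bool (q < real (card {i\<in>B. fst (z i)})) :: real"
  let ?hy = "\<lambda>z. of_bool (q < real (card {i\<in>B. snd (z i)})) :: real"
  have "PE (K2 eps) B (\<lambda>z. of_bool (real (card {i\<in>B. fst (z i)}) \<le> q) *
                            of_bool (real (card {i\<in>B. snd (z i)}) \<le> q))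
      = PE (K2 eps) B (\<lambda>z. 1 - ?hx z - ?hy z + ?hx z * ?hy z)"
    by (intro PE_cong) auto
  also have "\<dots> = PE (K2 eps) B (\<lambda>_. 1) - PE (K2 eps) B ?hx - PE (K2 eps) B ?hy + eB eps B q"
    unfolding eB_def by (simp add: PE_add PE_diff)
  also have "PE (K2 eps) B ?hx = Gt (card B) q"
    using PE_K2_fst[OF assms, of eps "\<lambda>k. of_bool (q < real k)"] count_gt[OF assms] by simp
  also have "PE (K2 eps) B ?hy = Gt (card B) q"
    using PE_K2_snd[OF assms, of eps "\<lambda>k. of_bool (q < real k)"] count_gt[OF assms] by simp
  also have "PE (K2 eps) B (\<lambda>_. 1) = 1"
    using PE_const[OF assms sum_K2] by simp
  finally show ?thesis by simp
qed

lemma eB_nonneg: "0 \<le> eps \<Longrightarrow> eps \<le> 1 \<Longrightarrow> eB eps B q \<ge> 0"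
  unfolding eB_def PE_def by (intro sum_nonneg mult_nonneg_nonneg prod_nonneg K2_nonneg) auto

definition phi :: "real \<Rightarrow> bool \<times> bool \<Rightarrow> real" where
  "phi eps c = of_bool (snd c) - (1 - eps) * of_bool (fst c) - eps / 2"

lemma phi_mean: "(\<Sum>b\<in>UNIV. K2 eps (a,b) * phi eps (a,b)) = 0 * (\<Sum>b\<in>UNIV. K2 eps (a,b))"
  by (cases a) (simp_all add: UNIV_bool K2_def noise_kernel_def phi_def field_simps)

lemma phi_var: "(\<Sum>b\<in>UNIV. K2 eps (a,b) * (phi eps (a,b))\<^sup>2) =
     ((eps/2) * (1 - eps/2)) * (\<Sum>b\<in>UNIV. K2 eps (a,b))"
  by (cases a) (simp_all add: UNIV_bool K2_def noise_kernel_def phi_def field_simps power2_eq_square)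

lemma PE_h_D2:
  assumes B: "finite B"
  shows "PE (K2 eps) B (\<lambda>z. of_bool (q < real (card {i\<in>B. fst (z i)})) * (\<Sum>i\<in>B. phi eps (z i))\<^sup>2)
       = real (card B) * ((eps/2) * (1 - eps/2)) * Gt (card B) q"
proof -
  let ?hx = "\<lambda>z. of_bool (q < real (card {i\<in>B. fst (z i)})) :: real"
  have hx_irr: "?hx (z(i:=(a,b))) = ?hx (z(i:=(a,b')))" for z i a b b'
  proof -
    have "{k\<in>B. fst ((z(i:=(a,b))) k)} = {k\<in>B. fst ((z(i:=(a,b'))) k)}" by auto
    then show ?thesis by simp
  qed
  have "PE (K2 eps) B (\<lambda>z. ?hx z * (\<Sum>i\<in>B. phi eps (z i))\<^sup>2)
      = PE (K2 eps) B (\<lambda>z. \<Sum>i\<in>B. \<Sum>j\<in>B. (?hx z * phi eps (z j)) * phi eps (z i))"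
    by (intro PE_cong) (simp add: power2_eq_square sum_product sum_distrib_left mult_ac)
  also have "\<dots> = (\<Sum>i\<in>B. \<Sum>j\<in>B. PE (K2 eps) B (\<lambda>z. (?hx z * phi eps (z j)) * phi eps (z i)))"
    using B by (simp add: PE_sum)
  also have "\<dots> = (\<Sum>i\<in>B. ((eps/2) * (1 - eps/2)) * Gt (card B) q)"
  proof (intro sum.cong refl)
    fix i assume i: "i \<in> B"
    have off: "PE (K2 eps) B (\<lambda>z. (?hx z * phi eps (z j)) * phi eps (z i)) = 0" if "j \<noteq> i" for j
    proof -
      have "PE (K2 eps) B (\<lambda>z. (?hx z * phi eps (z j)) * phi eps (z i)) = 0 * PE (K2 eps) B (\<lambda>z. ?hx z * phi eps (z j))"
      proof (rule PE_sumout[OF B i phi_mean])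
        fix z a b b'
        show "?hx (z(i:=(a,b))) * phi eps ((z(i:=(a,b))) j) = ?hx (z(i:=(a,b'))) * phi eps ((z(i:=(a,b'))) j)"
          using hx_irr[of z i a b b'] that by simp
      qed
      then show ?thesis by simp
    qed
    have diag: "PE (K2 eps) B (\<lambda>z. (?hx z * phi eps (z i)) * phi eps (z i)) = ((eps/2) * (1 - eps/2)) * Gt (card B) q"
    proof -
      have "PE (K2 eps) B (\<lambda>z. (?hx z * phi eps (z i)) * phi eps (z i)) = PE (K2 eps) B (\<lambda>z. ?hx z * (phi eps (z i))\<^sup>2)"
        by (simp add: power2_eq_square mult_ac)
      also have "\<dots> = ((eps/2) * (1 - eps/2)) * PE (K2 eps) B ?hx"
        by (rule PE_sumout[OF B i phi_var]) (rule hx_irr)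
      also have "PE (K2 eps) B ?hx = Gt (card B) q"
        using PE_K2_fst[OF B, of eps "\<lambda>k. of_bool (q < real k)"] count_gt[OF B] by simp
      finally show ?thesis .
    qed
    have "(\<Sum>j\<in>B. PE (K2 eps) B (\<lambda>z. (?hx z * phi eps (z j)) * phi eps (z i))) =
          PE (K2 eps) B (\<lambda>z. (?hx z * phi eps (z i)) * phi eps (z i))"
      by (rule sum.remove[OF B i, THEN trans]) (simp add: off)
    then show "(\<Sum>j\<in>B. PE (K2 eps) B (\<lambda>z. (?hx z * phi eps (z j)) * phi eps (z i))) =
          ((eps/2) * (1 - eps/2)) * Gt (card B) q" using diag by simp
  qed
  also have "\<dots> = real (card B) * ((eps/2) * (1 - eps/2)) * Gt (card B) q"
    by simp
  finally show ?thesis .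
qed

lemma sum_phi:
  "(\<Sum>i\<in>B. phi eps (z i)) = real (card {i\<in>B. snd (z i)}) - (1 - eps) * real (card {i\<in>B. fst (z i)})
     - eps * real (card B) / 2" if "finite B"
proof -
  have "(\<Sum>i\<in>B. phi eps (z i)) = (\<Sum>i\<in>B. of_bool (snd (z i))) - (1 - eps) * (\<Sum>i\<in>B. of_bool (fst (z i)))
     - (\<Sum>i\<in>B. eps / 2)"
    by (simp add: phi_def sum_subtractf sum_distrib_left)
  also have "(\<Sum>i\<in>B. of_bool (snd (z i)) :: real) = real (card {i\<in>B. snd (z i)})"
    using that by (simp add: Int_def)
  also have "(\<Sum>i\<in>B. of_bool (fst (z i)) :: real) = real (card {i\<in>B. fst (z i)})"
    using that by (simp add: Int_def)
  finally show ?thesis by simp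
qed

lemma eB_bound:
  assumes B: "finite B" and eps: "0 < eps" "eps < 1" and T: "0 < T"
    and TD: "T \<le> eps * (q - real (card B) / 2) - (1 - eps) * real D"
  shows "eB eps B q \<le> Gt (card B) (q + real D) + Gt (card B) q * real (card B) / (4 * T\<^sup>2)"
proof -
  let ?X = "\<lambda>z. real (card {i\<in>B. fst (z i)})"
  let ?Y = "\<lambda>z. real (card {i\<in>B. snd (z i)})"
  let ?hx = "\<lambda>z. of_bool (q < ?X z) :: real"
  let ?Dv = "\<lambda>z. (\<Sum>i\<in>B. phi eps (z i))"
  have pw: "?hx z * of_bool (q < ?Y z) \<le> of_bool (q + real D < ?X z) + ?hx z * (?Dv z)\<^sup>2 / T\<^sup>2" for z
  proof -
    have nn: "0 \<le> ?hx z * (?Dv z)\<^sup>2 / T\<^sup>2" by simp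
    show ?thesis
    proof (cases "q + real D < ?X z")
      case True
      then show ?thesis using nn by simp
    next
      case False
      show ?thesis
      proof (cases "q < ?X z \<and> q < ?Y z")
        case True
        have A: "?Dv z = ?Y z - (1 - eps) * ?X z - eps * real (card B) / 2"
          using sum_phi[OF B, of eps z] by simp
        have C0: "(1 - eps) * ?X z \<le> (1 - eps) * (q + real D)"
          using False eps by (intro mult_left_mono) auto
        have C: "(1 - eps) * ?X z \<le> (1 - eps) * q + (1 - eps) * real D"
          using C0 by (simp only: distrib_left)
        have E: "eps * (q - real (card B) / 2) = eps * q - eps * real (card B) / 2"
          by (simp add: right_diff_distrib)
        have F: "(1 - eps) * q = q - eps * q"
          by (simp add: left_diff_distrib)
        have "?Dv z > T"
          using True TD A C E F by linarith
        then have "T\<^sup>2 \<le> (?Dv z)\<^sup>2" using T by (intro power_mono) auto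
        then have "1 \<le> (?Dv z)\<^sup>2 / T\<^sup>2" using T by simp
        then show ?thesis using True by simp
      next
        case False
        then show ?thesis using nn by auto
      qed
    qed
  qed
  have "eB eps B q \<le> PE (K2 eps) B (\<lambda>z. of_bool (q + real D < ?X z) + ?hx z * (?Dv z)\<^sup>2 / T\<^sup>2)"
    unfolding eB_def using eps by (intro PE_mono K2_nonneg pw) auto
  also have "\<dots> = PE (K2 eps) B (\<lambda>z. of_bool (q + real D < ?X z)) + PE (K2 eps) B (\<lambda>z. ?hx z * (?Dv z)\<^sup>2) / T\<^sup>2"
    using PE_cmult[of "K2 eps" B "1 / T\<^sup>2" "\<lambda>z. ?hx z * (?Dv z)\<^sup>2"] by (simp add: PE_add)
  also have "PE (K2 eps) B (\<lambda>z. of_bool (q + real D < ?X z)) = Gt (card B) (q + real D)"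
    using PE_K2_fst[OF B, of eps "\<lambda>k. of_bool (q + real D < real k)"] count_gt[OF B] by simp
  also have "PE (K2 eps) B (\<lambda>z. ?hx z * (?Dv z)\<^sup>2) = real (card B) * ((eps/2) * (1 - eps/2)) * Gt (card B) q"
    by (rule PE_h_D2[OF B])
  also have "real (card B) * ((eps/2) * (1 - eps/2)) * Gt (card B) q / T\<^sup>2 \<le> Gt (card B) q * real (card B) / (4 * T\<^sup>2)"
  proof -
    have G0: "Gt (card B) q \<ge> 0" unfolding Gt_def by (intro sum_nonneg bp_nonneg)
    have v0: "(eps/2) * (1 - eps/2) = 1/4 - (eps/2 - 1/2)\<^sup>2"
      by (simp add: power2_eq_square algebra_simps)
    have v: "(eps/2) * (1 - eps/2) \<le> 1/4"
      unfolding v0 by simp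
    have "real (card B) * ((eps/2) * (1 - eps/2)) * Gt (card B) q \<le> real (card B) * (1/4) * Gt (card B) q"
      using v G0 by (intro mult_right_mono mult_left_mono) auto
    then have "real (card B) * ((eps/2) * (1 - eps/2)) * Gt (card B) q / T\<^sup>2 \<le> real (card B) * (1/4) * Gt (card B) q / T\<^sup>2"
      by (rule divide_right_mono) simp
    also have "real (card B) * (1/4) * Gt (card B) q / T\<^sup>2 = Gt (card B) q * real (card B) / (4 * T\<^sup>2)"
      by simp
    finally show ?thesis .
  qed
  finally show ?thesis by simp
qed

definition Blk :: "nat \<Rightarrow> nat \<Rightarrow> nat set" where
  "Blk l j = {j * l..<(j + 1) * l}"

lemma tribe_sum_Blk: "tribe_sum lam n x j = card {i\<in>Blk (tribe_len lam n) j. x i}"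
  by (simp add: tribe_sum_def Blk_def)

lemma card_Blk: "card (Blk l j) = l"
  by (simp add: Blk_def algebra_simps)

lemma finite_Blk: "finite (Blk l j)"
  by (simp add: Blk_def)

lemma Blk_disj: "j \<noteq> j' \<Longrightarrow> Blk l j \<inter> Blk l j' = {}"
proof -
  assume "j \<noteq> j'"
  then have "j + 1 \<le> j' \<or> j' + 1 \<le> j" by auto
  then show ?thesis
  proof
    assume "j + 1 \<le> j'"
    then have "(j + 1) * l \<le> j' * l" by (rule mult_right_mono) simp
    then show ?thesis by (auto simp: Blk_def)
  next
    assume "j' + 1 \<le> j"
    then have "(j' + 1) * l \<le> j * l" by (rule mult_right_mono) simp
    then show ?thesis by (auto simp: Blk_def)
  qed
qed

lemma tnum_mult: "tribe_num lam n * tribe_len lam n \<le> n"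
  using div_mult_mod_eq[of n "tribe_len lam n"] unfolding tribe_num_def by linarith

lemma Blk_sub:
  assumes "j < tribe_num lam n"
  shows "Blk (tribe_len lam n) j \<subseteq> {0..<n}"
proof -
  have "(j + 1) * tribe_len lam n \<le> tribe_num lam n * tribe_len lam n"
    using assms by (intro mult_right_mono) auto
  then have "(j + 1) * tribe_len lam n \<le> n" using tnum_mult[of lam n] by linarith
  then show ?thesis by (auto simp: Blk_def)
qed

lemma Max_real_le:
  assumes "finite S" "S \<noteq> {}"
  shows "real (Max S) \<le> q \<longleftrightarrow> (\<forall>s\<in>S. real s \<le> q)"
  using Max_in[OF assms] Max_ge[OF assms(1)] by (meson of_nat_le_iff order_trans)

lemma Max_real_lt:
  assumes "finite S" "S \<noteq> {}"
  shows "real (Max S) < q \<longleftrightarrow> (\<forall>s\<in>S. real s < q)"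
  using Max_in[OF assms] Max_ge[OF assms(1)] by (meson of_nat_le_iff le_less_trans)

lemma tmax_le:
  assumes "tribe_num lam n \<ge> 1"
  shows "real (tribe_max lam n x) \<le> q \<longleftrightarrow>
     (\<forall>j<tribe_num lam n. real (card {i\<in>Blk (tribe_len lam n) j. x i}) \<le> q)"
  unfolding tribe_max_def using assms by (subst Max_real_le) (auto simp: tribe_sum_Blk lessThan_empty_iff)

lemma tmax_lt:
  assumes "tribe_num lam n \<ge> 1"
  shows "real (tribe_max lam n x) < q \<longleftrightarrow>
     (\<forall>j<tribe_num lam n. real (card {i\<in>Blk (tribe_len lam n) j. x i}) < q)"
  unfolding tribe_max_def using assms by (subst Max_real_lt) (auto simp: tribe_sum_Blk lessThan_empty_iff)

lemma of_bool_all_prod: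
  fixes m :: nat
  shows "of_bool (\<forall>j<m. P j) = (\<Prod>j<m. of_bool (P j) :: real)"
  by (induction m) (auto simp: less_Suc_eq)

lemma dep_tmax: "dep (\<lambda>x. g (tribe_max lam n x)) {0..<n}"
  unfolding dep_def
proof (intro allI impI)
  fix x x' :: "nat \<Rightarrow> bool" assume h: "\<forall>j\<in>{0..<n}. x j = x' j"
  have "tribe_sum lam n x j = tribe_sum lam n x' j" if "j < tribe_num lam n" for j
  proof -
    have "{i\<in>Blk (tribe_len lam n) j. x i} = {i\<in>Blk (tribe_len lam n) j. x' i}"
      using Blk_sub[OF that] h by auto
    then show ?thesis by (simp add: tribe_sum_Blk)
  qed
  then have "tribe_sum lam n x ` {..<tribe_num lam n} = tribe_sum lam n x' ` {..<tribe_num lam n}"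
    by (intro image_cong) auto
  then show "g (tribe_max lam n x) = g (tribe_max lam n x')" by (simp add: tribe_max_def)
qed

context
  fixes lam :: real and n :: nat and q :: real
  assumes m1: "tribe_num lam n \<ge> 1"
begin

abbreviation "ll \<equiv> tribe_len lam n"
abbreviation "mm \<equiv> tribe_num lam n"

definition gj :: "nat \<Rightarrow> (nat \<Rightarrow> bool) \<Rightarrow> real" where
  "gj j x = of_bool (real (card {i\<in>Blk ll j. x i}) \<le> q)"

lemma dep_gj: "dep (gj j) (Blk ll j)"
  unfolding gj_def by (rule dep_cnt)

lemma notf_prod: "of_bool (\<not> q < real (tribe_max lam n x)) = (\<Prod>j<mm. gj j x)"
proof -
  have "(\<not> q < real (tribe_max lam n x)) = (\<forall>j<mm. real (card {i\<in>Blk ll j. x i}) \<le> q)"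
    using tmax_le[OF m1, of x q] by (simp add: not_less)
  then show ?thesis unfolding gj_def by (simp add: of_bool_all_prod)
qed

lemma f_prod: "of_bool (q < real (tribe_max lam n x)) = 1 - (\<Prod>j<mm. gj j x)"
proof -
  have e: "of_bool (q < real (tribe_max lam n x)) = 1 - (of_bool (\<not> q < real (tribe_max lam n x)) :: real)"
    by simp
  show ?thesis by (simp only: e notf_prod)
qed

lemma PE_prod_Blk:
  fixes F :: "nat \<Rightarrow> (nat \<Rightarrow> 'a::finite) \<Rightarrow> real"
  assumes "sum w UNIV = 1" "\<And>j. j < mm \<Longrightarrow> dep (F j) (Blk ll j)"
  shows "PE w {0..<n} (\<lambda>z. \<Prod>j<mm. F j z) = (\<Prod>j<mm. PE w (Blk ll j) (F j))"
proof (rule PE_prod_blocks[OF assms(1)])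
  show "finite {0..<n}" by simp
  fix j assume "j < mm"
  then show "Blk ll j \<subseteq> {0..<n}" by (rule Blk_sub)
  show "dep (F j) (Blk ll j)" using assms(2) \<open>j < mm\<close> by blast
next
  fix j j' :: nat assume "j \<noteq> j'"
  then show "Blk ll j \<inter> Blk ll j' = {}" by (rule Blk_disj)
qed

lemma dep_prod_gj: "dep (\<lambda>x. \<Prod>j<mm. gj j x) {0..<n}"
proof (rule dep_prod[where B="Blk ll"])
  fix j assume "j \<in> {..<mm}"
  then have j: "j < mm" by simp
  show "dep (gj j) (Blk ll j)" by (rule dep_gj)
  show "Blk ll j \<subseteq> {0..<n}" using j by (rule Blk_sub)
qed

lemma PE_prod_gj: "PE uw {0..<n} (\<lambda>x. \<Prod>j<mm. gj j x) = (1 - Gt ll q) ^ mm"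
proof -
  have "PE uw {0..<n} (\<lambda>x. \<Prod>j<mm. gj j x) = (\<Prod>j<mm. PE uw (Blk ll j) (gj j))"
    by (rule PE_prod_Blk[OF sum_uw dep_gj])
  also have "\<dots> = (\<Prod>j<mm. 1 - Gt ll q)"
  proof (intro prod.cong refl)
    fix j
    show "PE uw (Blk ll j) (gj j) = 1 - Gt ll q"
      unfolding gj_def using count_le[OF finite_Blk, of ll j q] by (simp add: card_Blk)
  qed
  finally show ?thesis by simp
qed

lemma G1: "prob_unif n (\<lambda>x. \<not> q < real (tribe_max lam n x)) = (1 - Gt ll q) ^ mm"
  unfolding prob_unif_PE by (simp only: notf_prod PE_prod_gj)

lemma G2: "prob_unif n (\<lambda>x. real (tribe_max lam n x) < q) = (1 - Ge ll q) ^ mm"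
proof -
  have "of_bool (real (tribe_max lam n x) < q) =
     (\<Prod>j<mm. of_bool (real (card {i\<in>Blk ll j. x i}) < q) :: real)" for x
    using tmax_lt[OF m1, of x q] by (simp add: of_bool_all_prod)
  then have "prob_unif n (\<lambda>x. real (tribe_max lam n x) < q) =
     PE uw {0..<n} (\<lambda>x. \<Prod>j<mm. of_bool (real (card {i\<in>Blk ll j. x i}) < q))"
    unfolding prob_unif_PE by simp
  also have "\<dots> = (\<Prod>j<mm. PE uw (Blk ll j) (\<lambda>x. of_bool (real (card {i\<in>Blk ll j. x i}) < q)))"
    by (rule PE_prod_Blk[OF sum_uw dep_cnt])
  also have "\<dots> = (\<Prod>j<mm. 1 - Ge ll q)"
    by (intro prod.cong refl) (simp add: count_lt finite_Blk card_Blk)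
  finally show ?thesis by simp
qed

lemma expect_f: "expect_unif n (\<lambda>x. of_bool (q < real (tribe_max lam n x))) = 1 - (1 - Gt ll q) ^ mm"
proof -
  have "expect_unif n (\<lambda>x. of_bool (q < real (tribe_max lam n x))) =
        PE uw {0..<n} (\<lambda>x. 1 - (\<Prod>j<mm. gj j x))"
    unfolding expect_unif_PE by (simp only: f_prod)
  also have "\<dots> = 1 - (1 - Gt ll q) ^ mm"
    by (simp add: PE_diff PE_const sum_uw PE_prod_gj)
  finally show ?thesis .
qed

definition cj :: "real \<Rightarrow> nat \<Rightarrow> real" where
  "cj eps j = PE (K2 eps) (Blk ll j) (\<lambda>z. gj j (\<lambda>i. fst (z i)) * gj j (\<lambda>i. snd (z i)))"

lemma cj_eq: "cj eps j = 1 - 2 * Gt ll q + eB eps (Blk ll j) q"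
  unfolding cj_def gj_def using cB[OF finite_Blk, of eps ll j q] by (simp add: card_Blk)

lemma cj_range: "0 \<le> eps \<Longrightarrow> eps \<le> 1 \<Longrightarrow> 0 \<le> cj eps j \<and> cj eps j \<le> 1"
proof -
  assume e: "0 \<le> eps" "eps \<le> 1"
  have "0 \<le> cj eps j" unfolding cj_def PE_def gj_def
    by (intro sum_nonneg mult_nonneg_nonneg prod_nonneg K2_nonneg e) auto
  moreover have "cj eps j \<le> PE (K2 eps) (Blk ll j) (\<lambda>_. 1)"
    unfolding cj_def gj_def by (intro PE_mono K2_nonneg e) auto
  moreover have "PE (K2 eps) (Blk ll j) (\<lambda>_. 1) = 1"
    by (rule PE_const[OF finite_Blk sum_K2])
  ultimately show ?thesis by simp
qed

lemma G3:
  "noise_corr n eps (\<lambda>x. q < real (tribe_max lam n x)) -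
     (expect_unif n (\<lambda>x. of_bool (q < real (tribe_max lam n x))))\<^sup>2
   = (\<Prod>j<mm. cj eps j) - (\<Prod>j<mm. (1 - Gt ll q)\<^sup>2)"
proof -
  let ?a = "1 - Gt ll q"
  let ?G = "\<lambda>x. \<Prod>j<mm. gj j x"
  have nc: "noise_corr n eps (\<lambda>x. q < real (tribe_max lam n x)) =
     PE (K2 eps) {0..<n} (\<lambda>z. (1 - ?G (\<lambda>i. fst (z i))) * (1 - ?G (\<lambda>i. snd (z i))))"
    by (subst noise_corr_PE[OF dep_tmax]) (simp only: f_prod)
  also have "\<dots> = PE (K2 eps) {0..<n} (\<lambda>z. 1 - ?G (\<lambda>i. fst (z i)) - ?G (\<lambda>i. snd (z i)) +
        (\<Prod>j<mm. gj j (\<lambda>i. fst (z i)) * gj j (\<lambda>i. snd (z i))))"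
    by (intro PE_cong) (simp add: algebra_simps prod.distrib)
  also have "\<dots> = 1 - PE (K2 eps) {0..<n} (\<lambda>z. ?G (\<lambda>i. fst (z i))) - PE (K2 eps) {0..<n} (\<lambda>z. ?G (\<lambda>i. snd (z i)))
      + PE (K2 eps) {0..<n} (\<lambda>z. \<Prod>j<mm. gj j (\<lambda>i. fst (z i)) * gj j (\<lambda>i. snd (z i)))"
    by (simp add: PE_add PE_diff PE_const sum_K2)
  also have "PE (K2 eps) {0..<n} (\<lambda>z. ?G (\<lambda>i. fst (z i))) = ?a ^ mm"
    using PE_proj[where \<pi>=fst and wa="K2 eps" and wb=uw, OF K2_fst _ dep_prod_gj] PE_prod_gj by simp
  also have "PE (K2 eps) {0..<n} (\<lambda>z. ?G (\<lambda>i. snd (z i))) = ?a ^ mm"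
    using PE_proj[where \<pi>=snd and wa="K2 eps" and wb=uw, OF K2_snd _ dep_prod_gj] PE_prod_gj by simp
  also have "PE (K2 eps) {0..<n} (\<lambda>z. \<Prod>j<mm. gj j (\<lambda>i. fst (z i)) * gj j (\<lambda>i. snd (z i)))
      = (\<Prod>j<mm. cj eps j)"
    unfolding cj_def
  proof (rule PE_prod_Blk[OF sum_K2])
    fix j assume "j < mm"
    show "dep (\<lambda>z. gj j (\<lambda>i. fst (z i)) * gj j (\<lambda>i. snd (z i))) (Blk ll j)"
      unfolding dep_def gj_def
      by (intro allI impI arg_cong2[where f="(*)"] arg_cong[where f="\<lambda>S. of_bool (real (card S) \<le> q)"] Collect_cong) auto
  qed
  finally have nc2: "noise_corr n eps (\<lambda>x. q < real (tribe_max lam n x)) = 1 - 2 * ?a ^ mm + (\<Prod>j<mm. cj eps j)"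
    by simp
  show ?thesis
  proof -
    have "(\<Prod>j<mm. (1 - Gt ll q)\<^sup>2) = ?a ^ mm * ?a ^ mm"
      by (simp add: power2_eq_square power_mult_distrib)
    then show ?thesis unfolding nc2 expect_f by (simp add: power2_eq_square algebra_simps)
  qed
qed

end

lemma prod_diff_le:
  fixes u v :: "nat \<Rightarrow> real"
  assumes "\<And>j. j < m \<Longrightarrow> 0 \<le> u j \<and> u j \<le> 1" "\<And>j. j < m \<Longrightarrow> 0 \<le> v j \<and> v j \<le> 1"
  shows "\<bar>(\<Prod>j<m. u j) - (\<Prod>j<m. v j)\<bar> \<le> (\<Sum>j<m. \<bar>u j - v j\<bar>)"
  using assms
proof (induction m)
  case 0 then show ?case by simp
next
  case (Suc m)
  let ?U = "\<Prod>j<m. u j" and ?V = "\<Prod>j<m. v j"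
  have U: "0 \<le> ?U" "?U \<le> 1" using Suc.prems(1) by (auto intro: prod_nonneg prod_le_1)
  have v: "0 \<le> v m" "v m \<le> 1" using Suc.prems(2) by auto
  have "(\<Prod>j<Suc m. u j) - (\<Prod>j<Suc m. v j) = ?U * (u m - v m) + v m * (?U - ?V)"
    by (simp add: algebra_simps)
  then have "\<bar>(\<Prod>j<Suc m. u j) - (\<Prod>j<Suc m. v j)\<bar> \<le> \<bar>?U * (u m - v m)\<bar> + \<bar>v m * (?U - ?V)\<bar>"
    by simp
  also have "\<bar>?U * (u m - v m)\<bar> \<le> \<bar>u m - v m\<bar>"
    using U by (simp add: abs_mult mult_left_le_one_le)
  also have "\<bar>v m * (?U - ?V)\<bar> \<le> \<bar>?U - ?V\<bar>"
    using v by (simp add: abs_mult mult_left_le_one_le)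
  also have "\<bar>?U - ?V\<bar> \<le> (\<Sum>j<m. \<bar>u j - v j\<bar>)"
    using Suc by simp
  finally show ?case by simp
qed

lemma bp_ratio: "bp l (Suc k) * (real k + 1) = bp l k * (real l - real k)"
proof (cases "k < l")
  case True
  then obtain n where l: "l = Suc n" by (cases l) auto
  have "Suc k * (l choose Suc k) = (l - k) * (l choose k)"
    using Suc_times_binomial[of k n] binomial_absorb_comp[of l k] l by simp
  then have h: "real (Suc k) * real (l choose Suc k) = real (l - k) * real (l choose k)"
    by (metis of_nat_mult)
  have e1: "real (Suc k) = real k + 1" by simp
  have e2: "real (l - k) = real l - real k" using True by (simp add: of_nat_diff)
  from h have "(real k + 1) * real (l choose Suc k) = (real l - real k) * real (l choose k)"
    by (simp only: e1 e2)
  then show ?thesis by (simp add: bp_def field_simps)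
next
  case False
  then show ?thesis
    by (cases "k = l") (simp_all add: bp_def binomial_eq_0)
qed

lemma bp_zero: "l < k \<Longrightarrow> bp l k = 0"
  by (simp add: bp_def binomial_eq_0)

lemma bp_sym: "k \<le> l \<Longrightarrow> bp l (l - k) = bp l k"
  by (simp add: bp_def binomial_symmetric[symmetric])

lemma Gt_nonneg: "Gt l x \<ge> 0" unfolding Gt_def by (intro sum_nonneg bp_nonneg)
lemma Ge_nonneg: "Ge l x \<ge> 0" unfolding Ge_def by (intro sum_nonneg bp_nonneg)

lemma Gt_le1: "Gt l x \<le> 1"
proof -
  have "Gt l x \<le> (\<Sum>k\<le>l. bp l k)"
    unfolding Gt_def by (intro sum_mono2) (auto intro: bp_nonneg)
  then show ?thesis using bp_sum by simp
qed

lemma Ge_le1: "Ge l x \<le> 1"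
proof -
  have "Ge l x \<le> (\<Sum>k\<le>l. bp l k)"
    unfolding Ge_def by (intro sum_mono2) (auto intro: bp_nonneg)
  then show ?thesis using bp_sum by simp
qed

lemma Gt_le_Ge: "Gt l x \<le> Ge l x"
  unfolding Gt_def Ge_def by (intro sum_mono2) (auto intro: bp_nonneg)

lemma Gt_mono: "x \<le> y \<Longrightarrow> Gt l y \<le> Gt l x"
  unfolding Gt_def by (intro sum_mono2) (auto intro: bp_nonneg)

lemma Ge_mono: "x \<le> y \<Longrightarrow> Ge l y \<le> Ge l x"
  unfolding Ge_def by (intro sum_mono2) (auto intro: bp_nonneg)

lemma Ge_Gt_diff: "Ge l x - Gt l x = (\<Sum>k\<in>{k. k \<le> l \<and> real k = x}. bp l k)"
proof -
  have "{k. k \<le> l \<and> x \<le> real k} = {k. k \<le> l \<and> x < real k} \<union> {k. k \<le> l \<and> real k = x}"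
    by auto
  then have "Ge l x = Gt l x + (\<Sum>k\<in>{k. k \<le> l \<and> real k = x}. bp l k)"
    unfolding Ge_def Gt_def by (subst sum.union_disjoint[symmetric]) auto
  then show ?thesis by simp
qed

lemma Ge_Gt_diff_le: "Ge l x - Gt l x \<le> (if x \<in> \<nat> then bp l (nat \<lfloor>x\<rfloor>) else 0)"
proof (cases "\<exists>k. k \<le> l \<and> real k = x")
  case True
  then obtain k where k: "k \<le> l" "real k = x" by auto
  then have "{k. k \<le> l \<and> real k = x} = {k}" by auto
  moreover have "x \<in> \<nat>" using k by auto
  moreover have "nat \<lfloor>x\<rfloor> = k" using k by auto
  ultimately show ?thesis by (simp add: Ge_Gt_diff)
next
  case False
  then have "{k. k \<le> l \<and> real k = x} = {}" by auto
  then have "Ge l x - Gt l x = 0" by (simp only: Ge_Gt_diff sum.empty)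
  then show ?thesis by (simp add: bp_nonneg)
qed

lemma Ge_hoeffding:
  assumes "l > 0" "u \<ge> 0"
  shows "Ge l (real l / 2 + u) \<le> exp (- 2 * u\<^sup>2 / real l)"
proof -
  let ?M = "binomial_pmf l (1/2)"
  have bd: "binomial_distribution (1/2::real)" by unfold_locales auto
  have "measure_pmf.prob ?M {x. real l * (1/2) + u \<le> real x} \<le> exp (- 2 * u\<^sup>2 / real l)"
    by (rule binomial_distribution.prob_ge[OF bd assms(1) assms(2)])
  moreover have "measure_pmf.prob ?M {x. real l * (1/2) + u \<le> real x} = Ge l (real l / 2 + u)"
  proof -
    have "measure_pmf.prob ?M {x. real l * (1/2) + u \<le> real x} =
          measure_pmf.prob ?M ({x. real l * (1/2) + u \<le> real x} \<inter> set_pmf ?M)"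
      by (rule measure_Int_set_pmf[symmetric])
    also have "{x. real l * (1/2) + u \<le> real x} \<inter> set_pmf ?M = {k. k \<le> l \<and> real l / 2 + u \<le> real k}"
      by (subst set_pmf_binomial) auto
    also have "measure_pmf.prob ?M \<dots> = sum (pmf ?M) {k. k \<le> l \<and> real l / 2 + u \<le> real k}"
      by (rule measure_measure_pmf_finite) simp
    also have "\<dots> = Ge l (real l / 2 + u)"
      unfolding Ge_def
    proof (intro sum.cong refl)
      fix k assume "k \<in> {k. k \<le> l \<and> real l / 2 + u \<le> real k}"
      then have k: "k \<le> l" by simp
      have "(1/2::real) ^ k * (1 - 1/2) ^ (l - k) = (1/2) ^ (k + (l - k))"
        by (simp add: power_add)
      also have "k + (l - k) = l" using k by simp
      finally show "pmf ?M k = bp l k"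
        by (simp add: pmf_binomial bp_def power_one_over)
    qed
    finally show ?thesis .
  qed
  ultimately show ?thesis by simp
qed

lemma Ge_half: "Ge l (real l / 2) \<ge> 1/2"
proof -
  let ?A = "{k. k \<le> l \<and> real l / 2 \<le> real k}"
  let ?B = "{k. k \<le> l \<and> real k \<le> real l / 2}"
  have bij: "bij_betw (\<lambda>k. l - k) ?A ?B"
    by (rule bij_betwI[where g="\<lambda>k. l - k"]) (auto simp: of_nat_diff)
  have symm: "(\<Sum>k\<in>?B. bp l k) = (\<Sum>k\<in>?A. bp l (l - k))"
    by (rule sum.reindex_bij_betw[OF bij, symmetric])
  also have "\<dots> = (\<Sum>k\<in>?A. bp l k)"
    by (intro sum.cong refl) (simp add: bp_sym)
  finally have AB: "(\<Sum>k\<in>?B. bp l k) = Ge l (real l / 2)" unfolding Ge_def .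
  have "{..l} = ?A \<union> ?B" by auto
  then have "1 = (\<Sum>k\<in>?A \<union> ?B. bp l k)" using bp_sum[of l] by simp
  also have "\<dots> \<le> (\<Sum>k\<in>?A. bp l k) + (\<Sum>k\<in>?B. bp l k)"
  proof -
    have "(\<Sum>k\<in>?A \<union> ?B. bp l k) = (\<Sum>k\<in>?A. bp l k) + (\<Sum>k\<in>?B. bp l k) - (\<Sum>k\<in>?A \<inter> ?B. bp l k)"
      by (rule sum_Un) auto
    moreover have "(\<Sum>k\<in>?A \<inter> ?B. bp l k) \<ge> 0" by (intro sum_nonneg bp_nonneg)
    ultimately show ?thesis by linarith
  qed
  finally show ?thesis using AB unfolding Ge_def by simp
qed

lemma Gt_shift1:
  assumes y: "y \<ge> 0" and rho: "\<And>j. y < real j \<Longrightarrow> bp l (Suc j) \<le> \<rho> * bp l j" and r0: "\<rho> \<ge> 0"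
  shows "Gt l (y + 1) \<le> \<rho> * Gt l y"
proof -
  have img: "{k. k \<le> l \<and> y + 1 < real k} = Suc ` {j. Suc j \<le> l \<and> y < real j}"
  proof (intro set_eqI iffI)
    fix k assume "k \<in> {k. k \<le> l \<and> y + 1 < real k}"
    then have k: "k \<le> l" "y + 1 < real k" by auto
    then have "k \<ge> 1" using y by (cases k) auto
    then obtain j where "k = Suc j" by (cases k) auto
    then show "k \<in> Suc ` {j. Suc j \<le> l \<and> y < real j}" using k by auto
  qed auto
  have "Gt l (y + 1) = (\<Sum>j\<in>{j. Suc j \<le> l \<and> y < real j}. bp l (Suc j))"
    unfolding Gt_def img by (subst sum.reindex) auto
  also have "\<dots> \<le> (\<Sum>j\<in>{j. Suc j \<le> l \<and> y < real j}. \<rho> * bp l j)"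
    by (intro sum_mono rho) auto
  also have "\<dots> \<le> (\<Sum>j\<in>{j. j \<le> l \<and> y < real j}. \<rho> * bp l j)"
    using r0 by (intro sum_mono2) (auto intro!: mult_nonneg_nonneg bp_nonneg)
  also have "\<dots> = \<rho> * Gt l y" unfolding Gt_def by (simp add: sum_distrib_left)
  finally show ?thesis .
qed

lemma Gt_shift:
  assumes x: "x \<ge> 0" and rho: "\<And>j. x < real j \<Longrightarrow> bp l (Suc j) \<le> \<rho> * bp l j" and r0: "\<rho> \<ge> 0"
  shows "Gt l (x + real D) \<le> \<rho> ^ D * Gt l x"
proof (induction D)
  case 0 then show ?case by simp
next
  case (Suc D)
  have "Gt l (x + real (Suc D)) = Gt l ((x + real D) + 1)" by (simp add: algebra_simps)
  also have "\<dots> \<le> \<rho> * Gt l (x + real D)"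
    by (rule Gt_shift1) (use x r0 in \<open>auto intro: rho\<close>)
  also have "\<dots> \<le> \<rho> * (\<rho> ^ D * Gt l x)"
    using Suc r0 by (intro mult_left_mono) auto
  finally show ?case by simp
qed

lemma bp_shift_low:
  assumes rho: "\<And>j. k \<le> j \<Longrightarrow> j < k + J \<Longrightarrow> bp l (Suc j) \<ge> \<rho> * bp l j" and r0: "\<rho> \<ge> 0"
  shows "i \<le> J \<Longrightarrow> bp l (k + i) \<ge> \<rho> ^ i * bp l k"
proof (induction i)
  case 0 then show ?case by simp
next
  case (Suc i)
  have "\<rho> ^ Suc i * bp l k = \<rho> * (\<rho> ^ i * bp l k)" by simp
  also have "\<dots> \<le> \<rho> * bp l (k + i)"
    using Suc r0 by (intro mult_left_mono) auto
  also have "\<dots> \<le> bp l (Suc (k + i))"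
    using Suc by (intro rho) auto
  finally show ?case by simp
qed

lemma ratio_up:
  assumes "x \<ge> 0" "x \<le> real l" "x < real j"
  shows "bp l (Suc j) \<le> ((real l - x) / (x + 1)) * bp l j"
proof (cases "j \<le> l")
  case True
  have "bp l (Suc j) = bp l j * ((real l - real j) / (real j + 1))"
    using bp_ratio[of l j] by (simp add: field_simps)
  also have "\<dots> \<le> bp l j * ((real l - x) / (x + 1))"
    using assms True by (intro mult_left_mono frac_le bp_nonneg) auto
  also have "\<dots> = ((real l - x) / (x + 1)) * bp l j" by (rule mult.commute)
  finally show ?thesis .
next
  case False
  then show ?thesis by (simp add: bp_zero)
qed

lemma ratio_low:
  assumes "j < l"
  shows "bp l (Suc j) = ((real l - real j) / (real j + 1)) * bp l j"
  using bp_ratio[of l j] by (simp add: field_simps)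

lemma GA:
  fixes k J l :: nat
  assumes J1: "J \<ge> 1" and kl: "real l / 2 \<le> real k"
    and c: "8 * real J * ((real k - real l / 2) + real J) \<le> real l"
  shows "bp l k \<le> 2 * Gt l (real k) / real J"
proof -
  define t where "t = real k - real l / 2"
  have t0: "t \<ge> 0" using kl by (simp add: t_def)
  have c': "8 * real J * (t + real J) \<le> real l" using c by (simp add: t_def)
  have pos: "8 * real J * (t + real J) > 0" using J1 t0 by (intro mult_pos_pos) auto
  have l0: "real l > 0" using c' pos by linarith
  have tJ: "t + real J \<le> real l / 8"
  proof -
    have "8 * (t + real J) \<le> 8 * real J * (t + real J)"
      using J1 t0 by (intro mult_right_mono) auto
    then have "8 * (t + real J) \<le> real l" using c' by (rule order_trans)
    then show ?thesis by simp
  qed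
  have kJl: "k + J \<le> l" using tJ unfolding t_def by linarith
  define \<rho> where "\<rho> = (real l - real k - real J) / (real k + real J)"
  have kJpos: "real k + real J > 0" using J1 by simp
  have r0: "\<rho> \<ge> 0" unfolding \<rho>_def using kJl kJpos by (intro divide_nonneg_pos) auto
  have r1: "\<rho> \<le> 1" unfolding \<rho>_def using kl kJpos by (simp add: divide_le_eq_1)
  have rho: "bp l (Suc j) \<ge> \<rho> * bp l j" if "k \<le> j" "j < k + J" for j
  proof -
    have jl: "j < l" using that kJl by linarith
    have "\<rho> \<le> (real l - real j) / (real j + 1)"
      unfolding \<rho>_def using that kJl kJpos by (intro frac_le) auto
    then show ?thesis unfolding ratio_low[OF jl] using bp_nonneg[of l j] by (intro mult_right_mono) auto
  qed
  have one_minus: "1 - \<rho> \<le> 4 * (t + real J) / real l"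
  proof -
    have "1 - \<rho> = (2 * real k + 2 * real J - real l) / (real k + real J)"
      unfolding \<rho>_def using kJpos by (simp add: field_simps)
    also have "\<dots> \<le> (2 * real k + 2 * real J - real l) / (real l / 2)"
      using kJpos kl t0 l0 unfolding t_def by (intro divide_left_mono) (auto simp: t_def)
    also have "\<dots> = 4 * (t + real J) / real l" unfolding t_def using l0 by (simp add: field_simps)
    finally show ?thesis .
  qed
  have rJ: "\<rho> ^ J \<ge> 1/2"
  proof -
    have B0: "1 + real J * (\<rho> - 1) \<le> (1 + (\<rho> - 1)) ^ J"
      by (rule Bernoulli_inequality) (use r0 in simp)
    have B: "1 - real J * (1 - \<rho>) \<le> \<rho> ^ J"
      using B0 by (simp add: algebra_simps)
    have X1: "real J * (1 - \<rho>) \<le> real J * (4 * (t + real J) / real l)"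
      using one_minus by (intro mult_left_mono) auto
    have X2: "real J * (4 * (t + real J) / real l) \<le> 1/2"
      using c' l0 by (simp add: field_simps)
    show ?thesis using B X1 X2 by linarith
  qed
  have each: "bp l (k + i) \<ge> bp l k / 2" if "1 \<le> i" "i \<le> J" for i
  proof -
    have "\<rho> ^ J \<le> \<rho> ^ i" using r0 r1 that by (intro power_decreasing) auto
    then have "\<rho> ^ i \<ge> 1/2" using rJ by linarith
    then have "\<rho> ^ i * bp l k \<ge> (1/2) * bp l k" using bp_nonneg[of l k] by (intro mult_right_mono) auto
    moreover have "bp l (k + i) \<ge> \<rho> ^ i * bp l k"
      by (rule bp_shift_low[OF _ r0 that(2)]) (rule rho)
    ultimately show ?thesis by simp
  qed
  have "real J * (bp l k / 2) = (\<Sum>i\<in>{1..J}. bp l k / 2)" by simp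
  also have "\<dots> \<le> (\<Sum>i\<in>{1..J}. bp l (k + i))" by (intro sum_mono each) auto
  also have "\<dots> = (\<Sum>j\<in>(\<lambda>i. k + i) ` {1..J}. bp l j)" by (subst sum.reindex) auto
  also have "\<dots> \<le> Gt l (real k)"
    unfolding Gt_def using kJl by (intro sum_mono2) (auto intro: bp_nonneg)
  finally have "real J * (bp l k / 2) \<le> Gt l (real k)" .
  then show ?thesis using J1 by (simp add: field_simps)
qed

lemma GB:
  assumes l1: "real l \<ge> 1" and q1: "real l / 2 \<le> q" and q2: "q \<le> real l"
  shows "Gt l (q + real D) \<le> exp (- (q - real l / 2) * real D / real l) * Gt l q"
proof -
  define t where "t = q - real l / 2"
  have t0: "t \<ge> 0" "t \<le> real l / 2" using q1 q2 by (auto simp: t_def)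
  define \<rho> where "\<rho> = (real l - q) / (q + 1)"
  have q0: "q \<ge> 0" using q1 l1 by simp
  have r0: "\<rho> \<ge> 0" unfolding \<rho>_def using q0 q2 by simp
  have sh: "Gt l (q + real D) \<le> \<rho> ^ D * Gt l q"
    by (rule Gt_shift[OF q0 _ r0]) (unfold \<rho>_def, rule ratio_up, use q0 q2 in auto)
  have r1: "\<rho> \<le> 1 - t / real l"
  proof -
    have t2: "t * t \<le> real l / 2 * t" using t0 by (intro mult_right_mono) auto
    have t3: "t \<le> real l * t" using t0 l1 by (simp add: mult_le_cancel_right1)
    have diff: "(real l - t) * (q + 1) - (real l - q) * real l = 3/2 * real l * t + real l - t * t - t"
      unfolding t_def by (simp add: field_simps)
    have key: "(real l - q) * real l \<le> (real l - t) * (q + 1)"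
      using diff t2 t3 l1 t0 by (simp add: algebra_simps)
    have "\<rho> = (real l - q) * real l / ((q + 1) * real l)"
      unfolding \<rho>_def using l1 by simp
    also have "\<dots> \<le> (real l - t) * (q + 1) / ((q + 1) * real l)"
      using key q0 l1 by (intro divide_right_mono) auto
    also have "\<dots> = (q + 1) * (real l - t) / ((q + 1) * real l)" by (simp add: mult.commute)
    also have "\<dots> = (real l - t) / real l"
      using q0 by (intro mult_divide_mult_cancel_left) simp
    also have "\<dots> = 1 - t / real l" using l1 by (simp add: diff_divide_distrib)
    finally show ?thesis .
  qed
  have "\<rho> ^ D \<le> (exp (- t / real l)) ^ D"
  proof (rule power_mono[OF _ r0])
    have "1 + (- t / real l) \<le> exp (- t / real l)" by (rule exp_ge_add_one_self)
    then show "\<rho> \<le> exp (- t / real l)" using r1 by simp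
  qed
  also have "\<dots> = exp (- t * real D / real l)"
    by (simp add: exp_of_nat_mult[symmetric] mult.commute)
  finally have "\<rho> ^ D \<le> exp (- t * real D / real l)" .
  then have "\<rho> ^ D * Gt l q \<le> exp (- t * real D / real l) * Gt l q"
    by (intro mult_right_mono Gt_nonneg)
  then show ?thesis using sh unfolding t_def by simp
qed

lemma pow_exp_lower:
  assumes "0 \<le> y" "y \<le> 1/2"
  shows "(1 - y) ^ s \<ge> exp (- 2 * y * real s)"
proof -
  have "- y - 2 * y\<^sup>2 \<le> ln (1 - y)" by (rule ln_one_minus_pos_lower_bound) (use assms in auto)
  moreover have "2 * y\<^sup>2 \<le> y"
  proof -
    have "y * y \<le> y * (1/2)" using assms by (intro mult_left_mono) auto
    then show ?thesis by (simp add: power2_eq_square)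
  qed
  ultimately have L: "- 2 * y \<le> ln (1 - y)" by linarith
  have pos: "1 - y > 0" using assms by simp
  have "(1 - y) ^ s = exp (ln ((1 - y) ^ s))"
    using pos by simp
  also have "\<dots> = exp (real s * ln (1 - y))"
    using pos by (simp add: ln_realpow)
  also have "exp (real s * ln (1 - y)) \<ge> exp (- 2 * y * real s)"
  proof -
    have M: "real s * (- 2 * y) \<le> real s * ln (1 - y)" by (rule mult_left_mono[OF L]) simp
    then show ?thesis by (simp add: algebra_simps)
  qed
  finally show ?thesis .
qed

lemma LB:
  assumes l1: "real l \<ge> 1" and u0: "u \<ge> 0" and ul: "4 * (4 * u + 3) \<le> real l"
  shows "Gt l (real l / 2 + u) \<ge> (1/2 - exp (- 2 * u\<^sup>2 / real l)) * exp (- 16 * (u + 1)\<^sup>2 / real l)"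
proof -
  define s where "s = nat \<lfloor>u\<rfloor> + 1"
  have s1: "real s > u" "real s \<le> u + 1" unfolding s_def using u0
    by (simp_all add: of_nat_nat) linarith+
  define W where "W = {k. k \<le> l \<and> real l / 2 \<le> real k \<and> real k < real l / 2 + u}"
  define y where "y = 2 * (4 * u + 3) / real l"
  have y0: "0 \<le> y" "y \<le> 1/2" unfolding y_def using u0 l1 ul by (simp_all add: field_simps)
  define c where "c = exp (- 16 * (u + 1)\<^sup>2 / real l)"
  have c0: "c \<ge> 0" unfolding c_def by simp
  have ratio: "bp l (Suc j) \<ge> (1 - y) * bp l j" if "real l / 2 \<le> real j" "real j < real l / 2 + 2 * u + 1" for j
  proof -
    have h: "16 * u + 12 \<le> real l" using ul by simp
    have "real j < real l" using that h u0 by linarith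
    then have jl: "j < l" by simp
    have yj: "y * (real j + 1) \<ge> y * (real l / 2)"
      using y0 that by (intro mult_left_mono) auto
    have yl: "y * (real l / 2) = 4 * u + 3" unfolding y_def using l1 by simp
    have "(1 - y) * (real j + 1) \<le> real l - real j"
      using yj yl that by (simp add: algebra_simps)
    then have "1 - y \<le> (real l - real j) / (real j + 1)"
      by (simp add: le_divide_eq add_pos_nonneg)
    then show ?thesis unfolding ratio_low[OF jl] using bp_nonneg[of l j] by (intro mult_right_mono) auto
  qed
  have cpow: "c \<le> (1 - y) ^ s"
  proof -
    have "2 * y * real s \<le> 2 * y * (u + 1)" using y0 s1 by (intro mult_left_mono) auto
    also have "2 * y * (u + 1) = 4 * (4 * u + 3) * (u + 1) / real l" unfolding y_def by simp
    also have "\<dots> \<le> 16 * (u + 1)\<^sup>2 / real l"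
      using u0 l1 by (intro divide_right_mono) (simp_all add: power2_eq_square algebra_simps)
    finally have "- 16 * (u + 1)\<^sup>2 / real l \<le> - 2 * y * real s" by simp
    then have "c \<le> exp (- 2 * y * real s)" unfolding c_def by simp
    also have "\<dots> \<le> (1 - y) ^ s" by (rule pow_exp_lower[OF y0])
    finally show ?thesis .
  qed
  have each: "bp l (k + s) \<ge> c * bp l k" if "k \<in> W" for k
  proof -
    have "bp l (k + s) \<ge> (1 - y) ^ s * bp l k"
    proof (rule bp_shift_low[where J=s])
      fix j assume "k \<le> j" "j < k + s"
      then have "real l / 2 \<le> real j" "real j < real l / 2 + 2 * u + 1"
        using that s1 unfolding W_def by auto
      then show "bp l (Suc j) \<ge> (1 - y) * bp l j" by (rule ratio)
    qed (use y0 in auto)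
    moreover have "c * bp l k \<le> (1 - y) ^ s * bp l k" using cpow bp_nonneg[of l k] by (rule mult_right_mono)
    ultimately show ?thesis by simp
  qed
  have "c * (\<Sum>k\<in>W. bp l k) \<le> (\<Sum>k\<in>W. bp l (k + s))"
    unfolding sum_distrib_left by (intro sum_mono each)
  also have "\<dots> = (\<Sum>j\<in>(\<lambda>k. k + s) ` W. bp l j)" by (subst sum.reindex) (auto simp: inj_on_def)
  also have "\<dots> \<le> Gt l (real l / 2 + u)"
    unfolding Gt_def
  proof (intro sum_mono2)
    show "(\<lambda>k. k + s) ` W \<subseteq> {k. k \<le> l \<and> real l / 2 + u < real k}"
    proof
      fix j assume "j \<in> (\<lambda>k. k + s) ` W"
      then obtain k where k: "k \<in> W" "j = k + s" by auto
      have "real j < real l / 2 + 2 * u + 1" "real l / 2 + u < real j"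
        using k s1 unfolding W_def by auto
      then show "j \<in> {k. k \<le> l \<and> real l / 2 + u < real k}" using ul by auto
    qed
  qed (auto intro: bp_nonneg)
  finally have main: "c * (\<Sum>k\<in>W. bp l k) \<le> Gt l (real l / 2 + u)" .
  have W_eq: "W = {k. k \<le> l \<and> real l / 2 \<le> real k} - {k. k \<le> l \<and> real l / 2 + u \<le> real k}"
    unfolding W_def by auto
  have "(\<Sum>k\<in>W. bp l k) = Ge l (real l / 2) - Ge l (real l / 2 + u)"
    unfolding W_eq Ge_def using u0 by (subst sum_diff) auto
  also have "\<dots> \<ge> 1/2 - exp (- 2 * u\<^sup>2 / real l)"
    using Ge_half[of l] Ge_hoeffding[of l u] u0 l1 by simp
  finally have SW: "1/2 - exp (- 2 * u\<^sup>2 / real l) \<le> (\<Sum>k\<in>W. bp l k)" .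
  have X: "c * (1/2 - exp (- 2 * u\<^sup>2 / real l)) \<le> c * (\<Sum>k\<in>W. bp l k)"
    by (rule mult_left_mono[OF SW c0])
  have "(1/2 - exp (- 2 * u\<^sup>2 / real l)) * exp (- 16 * (u + 1)\<^sup>2 / real l) = c * (1/2 - exp (- 2 * u\<^sup>2 / real l))"
    unfolding c_def by (rule mult.commute)
  also have "\<dots> \<le> Gt l (real l / 2 + u)" using X main by linarith
  finally show ?thesis .
qed

lemma eventually_compose_at_top:
  assumes "filterlim f at_top F" "eventually P at_top"
  shows "eventually (\<lambda>x. P (f x)) F"
  using assms filterlim_iff by blast

lemma pow_diff_le:
  fixes x y :: real
  assumes "0 \<le> y" "y \<le> x" "x \<le> 1"
  shows "x ^ m - y ^ m \<le> real m * (x - y)"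
proof -
  have "\<bar>(\<Prod>j<m. x) - (\<Prod>j<m. y)\<bar> \<le> (\<Sum>j<m. \<bar>x - y\<bar>)"
    by (rule prod_diff_le) (use assms in auto)
  then show ?thesis using assms by (simp add: prod_constant)
qed

lemma F1_lemma:
  fixes p beta :: real
  assumes "0 \<le> p" "p \<le> 1" "beta > 0" "(1 - p) ^ m \<ge> beta"
  shows "real m * p \<le> - ln beta"
proof -
  have "(1 - p) ^ m \<le> exp (- p) ^ m"
    using assms by (intro power_mono) (auto simp: exp_ge_add_one_self[of "-p", simplified])
  also have "\<dots> = exp (- (real m * p))" by (simp add: exp_of_nat_mult[symmetric])
  finally have "beta \<le> exp (- (real m * p))" using assms by linarith
  then have "ln beta \<le> ln (exp (- (real m * p)))" using assms by (subst ln_le_cancel_iff) auto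
  then have "ln beta \<le> - (real m * p)" by simp
  then show ?thesis by simp
qed

lemma F2_lemma:
  fixes p beta :: real
  assumes "0 \<le> p" "p \<le> 1" "(1 - p) ^ m \<le> beta"
  shows "1 - beta \<le> real m * p"
proof -
  have "1 + real m * (- p) \<le> (1 + (- p)) ^ m"
    by (rule Bernoulli_inequality) (use assms in simp)
  then show ?thesis using assms by simp
qed

lemma Ge_le_Gt: "x < y \<Longrightarrow> Ge l y \<le> Gt l x"
  unfolding Ge_def Gt_def by (intro sum_mono2) (auto intro: bp_nonneg)

locale tribes =
  fixes lam beta :: real and q :: "nat \<Rightarrow> real"
  assumes lam: "0 < lam" "lam < 1" and beta: "0 < beta" "beta < 1"
    and quant: "\<forall>n. is_quantile n (tribe_max lam n) beta (q n)"
begin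

abbreviation "lt n \<equiv> tribe_len lam n"
abbreviation "mt n \<equiv> tribe_num lam n"

lemma basic_l:
  assumes n: "n \<ge> 1"
  shows "1 \<le> lt n" "real (lt n) \<le> real n powr lam" "real n powr lam - 1 < real (lt n)" "lt n \<le> n"
proof -
  let ?x = "real n powr lam"
  have x1: "?x \<ge> 1" using n lam by (intro ge_one_powr_ge_zero) auto
  have xn: "?x \<le> real n" using n lam powr_mono[of lam 1 "real n"] by simp
  have fl: "\<lfloor>?x\<rfloor> \<ge> 1" using x1 by (simp add: one_le_floor)
  have e: "real (lt n) = real_of_int \<lfloor>?x\<rfloor>" unfolding tribe_len_def using fl by simp
  have "nat 1 \<le> nat \<lfloor>?x\<rfloor>" using fl by (rule nat_mono)
  then show "1 \<le> lt n" unfolding tribe_len_def by simp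
  show "real (lt n) \<le> ?x" unfolding e by (rule of_int_floor_le)
  show "?x - 1 < real (lt n)" unfolding e by (rule real_of_int_floor_gt_diff_one)
  have "real (lt n) \<le> real n" unfolding e using xn of_int_floor_le[of ?x] by linarith
  then show "lt n \<le> n" by simp
qed

lemma basic_m:
  assumes n: "n \<ge> 1"
  shows "1 \<le> mt n" "real (mt n) \<le> real n" "real n powr (1 - lam) - 1 \<le> real (mt n)"
proof -
  note l = basic_l[OF n]
  have "0 < n div lt n" using l by (subst div_greater_zero_iff) auto
  then show "1 \<le> mt n" unfolding tribe_num_def by simp
  show "real (mt n) \<le> real n" unfolding tribe_num_def by simp
  have "n = mt n * lt n + n mod lt n" unfolding tribe_num_def by (rule div_mult_mod_eq[symmetric])
  moreover have "n mod lt n < lt n" using l by simp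
  ultimately have "n < mt n * lt n + lt n" by linarith
  then have "real n < real (mt n * lt n + lt n)" by (simp only: of_nat_less_iff)
  then have "real n < (real (mt n) + 1) * real (lt n)" by (simp add: algebra_simps)
  then have A: "real n / real (lt n) < real (mt n) + 1" using l by (simp add: field_simps)
  have "real n powr (1 - lam) = real n / real n powr lam" using n by (simp add: powr_diff)
  also have "\<dots> \<le> real n / real (lt n)"
    using l n by (intro divide_left_mono) auto
  finally show "real n powr (1 - lam) - 1 \<le> real (mt n)" using A by linarith
qed

lemma quant_G:
  assumes n: "n \<ge> 1"
  shows "(1 - Gt (lt n) (q n)) ^ mt n \<ge> beta" "(1 - Ge (lt n) (q n)) ^ mt n \<le> beta"
proof -
  have m1: "mt n \<ge> 1" by (rule basic_m(1)[OF n])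
  have Q: "prob_unif n (\<lambda>x. real (tribe_max lam n x) < q n) \<le> beta"
          "beta \<le> prob_unif n (\<lambda>x. real (tribe_max lam n x) \<le> q n)"
    using quant unfolding is_quantile_def by auto
  have "(\<lambda>x. real (tribe_max lam n x) \<le> q n) = (\<lambda>x. \<not> q n < real (tribe_max lam n x))"
    by (auto simp: not_less)
  then show "(1 - Gt (lt n) (q n)) ^ mt n \<ge> beta" using Q(2) G1[OF m1] by simp
  show "(1 - Ge (lt n) (q n)) ^ mt n \<le> beta" using Q(1) G2[OF m1] by simp
qed

definition "LL = - ln beta"

lemma LL_pos: "LL > 0" unfolding LL_def using beta by simp

lemma F1: "n \<ge> 1 \<Longrightarrow> real (mt n) * Gt (lt n) (q n) \<le> LL"
  unfolding LL_def by (rule F1_lemma[OF Gt_nonneg Gt_le1 beta(1) quant_G(1)])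

lemma F2: "n \<ge> 1 \<Longrightarrow> 1 - beta \<le> real (mt n) * Ge (lt n) (q n)"
  by (rule F2_lemma[OF Ge_nonneg Ge_le1 quant_G(2)])

lemma m_inf: "filterlim (\<lambda>n. real (mt n)) at_top sequentially"
proof (rule filterlim_at_top_mono[where f="\<lambda>n. real n powr (1 - lam) - 1"])
  show "filterlim (\<lambda>n. real n powr (1 - lam) - 1) at_top sequentially" using lam by real_asymp
  show "\<forall>\<^sub>F n in sequentially. real n powr (1 - lam) - 1 \<le> real (mt n)"
    using eventually_ge_at_top[of 1] by eventually_elim (rule basic_m(3))
qed

lemma l_inf: "filterlim (\<lambda>n. real (lt n)) at_top sequentially"
proof (rule filterlim_at_top_mono[where f="\<lambda>n. real n powr lam - 1"])
  show "filterlim (\<lambda>n. real n powr lam - 1) at_top sequentially" using lam by real_asymp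
  show "\<forall>\<^sub>F n in sequentially. real n powr lam - 1 \<le> real (lt n)"
    using eventually_ge_at_top[of 1] by eventually_elim (use basic_l(3) in force)
qed

lemma E1: "eventually (\<lambda>n. real (lt n) / 2 \<le> q n) sequentially"
proof -
  have "eventually (\<lambda>n. real (mt n) > 2 * LL) sequentially"
    using m_inf by (simp add: filterlim_at_top_dense)
  then show ?thesis using eventually_ge_at_top[of 1]
  proof eventually_elim
    case (elim n)
    show ?case
    proof (rule ccontr)
      assume "\<not> real (lt n) / 2 \<le> q n"
      then have "Ge (lt n) (real (lt n) / 2) \<le> Gt (lt n) (q n)" by (intro Ge_le_Gt) simp
      then have "Gt (lt n) (q n) \<ge> 1/2" using Ge_half[of "lt n"] by simp
      then have "real (mt n) * Gt (lt n) (q n) \<ge> real (mt n) * (1/2)" by (intro mult_left_mono) auto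
      then show False using F1[OF elim(2)] elim(1) by simp
    qed
  qed
qed

definition "c0 = 1 - beta"
lemma c0_pos: "c0 > 0" unfolding c0_def using beta by simp

definition "tt n = q n - real (lt n) / 2"

lemma E2:
  assumes n: "n \<ge> 1" and h: "real (lt n) / 2 \<le> q n"
  shows "(tt n)\<^sup>2 \<le> real (lt n) / 2 * ln (real n / c0)"
proof -
  note l = basic_l[OF n] and m = basic_m[OF n]
  have t0: "tt n \<ge> 0" using h by (simp add: tt_def)
  have mpos: "real (mt n) > 0" using m by simp
  have "c0 / real (mt n) \<le> Ge (lt n) (q n)"
    using F2[OF n] mpos unfolding c0_def by (simp add: field_simps)
  also have "Ge (lt n) (q n) = Ge (lt n) (real (lt n) / 2 + tt n)" by (simp add: tt_def)
  also have "\<dots> \<le> exp (- 2 * (tt n)\<^sup>2 / real (lt n))"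
    by (rule Ge_hoeffding) (use l t0 in auto)
  finally have A: "c0 / real (mt n) \<le> exp (- 2 * (tt n)\<^sup>2 / real (lt n))" .
  have cm: "c0 / real (mt n) > 0" using c0_pos mpos by simp
  have "ln (c0 / real (mt n)) \<le> ln (exp (- 2 * (tt n)\<^sup>2 / real (lt n)))"
    using A cm by (subst ln_le_cancel_iff) auto
  then have "ln (c0 / real (mt n)) \<le> - 2 * (tt n)\<^sup>2 / real (lt n)" by simp
  then have "2 * (tt n)\<^sup>2 / real (lt n) \<le> ln (real (mt n) / c0)"
    using cm c0_pos mpos by (simp add: ln_div)
  also have "\<dots> \<le> ln (real n / c0)"
    using m mpos c0_pos by (subst ln_le_cancel_iff) (auto intro: divide_right_mono)
  finally have "2 * (tt n)\<^sup>2 / real (lt n) \<le> ln (real n / c0)" .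
  then show ?thesis using l by (simp add: field_simps)
qed

end

lemma A1: "0 < lam \<Longrightarrow> 0 < c \<Longrightarrow> eventually (\<lambda>n. 8 * real n powr (lam/8) * (sqrt (real n powr lam * ln (real n / c)) + real n powr (lam/8)) \<le> real n powr lam - 1) sequentially"
  by real_asymp
lemma A2: "0 < lam \<Longrightarrow> 0 < c \<Longrightarrow> eventually (\<lambda>n. 2 * ln (real n / c) \<le> real n powr lam - 1) sequentially"
  by real_asymp
lemma A3: "0 < lam \<Longrightarrow> ((\<lambda>n. L / (real n powr (lam/8) - 1)) \<longlongrightarrow> 0) sequentially"
  by real_asymp
lemma A4: "0 < lam \<Longrightarrow> eventually (\<lambda>n. 2 \<le> real n powr (lam/8)) sequentially"
  by real_asymp
lemma A5: "0 < c \<Longrightarrow> eventually (\<lambda>n. 0 \<le> ln (real n / c)) sequentially"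
  by real_asymp
lemma A6: "0 < eps \<Longrightarrow> ((\<lambda>K::real. L * exp (1 - eps * K / 2) + L / (eps\<^sup>2 * K)) \<longlongrightarrow> 0) at_top"
  by real_asymp
lemma A7: "0 < M \<Longrightarrow> eventually (\<lambda>x::real. 16 * M * sqrt x + 12 \<le> x) at_top"
  by real_asymp

context tribes
begin

lemma tle: "eventually (\<lambda>n. tt n \<le> real (lt n) / 2) sequentially"
  using E1 A2[OF lam(1) c0_pos] eventually_ge_at_top[of 1]
proof eventually_elim
  case (elim n)
  have t0: "tt n \<ge> 0" using elim(1) by (simp add: tt_def)
  have l: "real n powr lam - 1 < real (lt n)" "1 \<le> lt n" using basic_l[OF elim(3)] by auto
  have "(tt n)\<^sup>2 \<le> real (lt n) / 2 * ln (real n / c0)" by (rule E2[OF elim(3) elim(1)])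
  also have "\<dots> \<le> real (lt n) / 2 * (real (lt n) / 2)"
  proof (rule mult_left_mono)
    show "ln (real n / c0) \<le> real (lt n) / 2" using elim(2) l(1) by linarith
    show "0 \<le> real (lt n) / 2" by simp
  qed
  also have "\<dots> = (real (lt n) / 2)\<^sup>2" by (simp add: power2_eq_square)
  finally have "(tt n)\<^sup>2 \<le> (real (lt n) / 2)\<^sup>2" .
  then show ?case by (rule power2_le_imp_le) simp
qed

definition "JJ n = nat \<lfloor>real n powr (lam / 8)\<rfloor>"

lemma P_bound: "eventually (\<lambda>n. \<bar>prob_unif n (\<lambda>x. \<not> q n < real (tribe_max lam n x)) - beta\<bar>
    \<le> 2 * LL / (real n powr (lam/8) - 1)) sequentially"
  using E1 A1[OF lam(1) c0_pos] A4[OF lam(1)] A5[OF c0_pos] eventually_ge_at_top[of 1]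
proof eventually_elim
  case (elim n)
  note l = basic_l[OF elim(5)] and m = basic_m[OF elim(5)]
  let ?l = "lt n" and ?m = "mt n" and ?G = "Gt (lt n) (q n)" and ?H = "Ge (lt n) (q n)"
  let ?x = "real n powr (lam / 8)"
  let ?S = "sqrt (real n powr lam * ln (real n / c0))"
  have x2: "2 \<le> ?x" by (rule elim(3))
  have Jr: "?x - 1 < real (JJ n)" "real (JJ n) \<le> ?x"
  proof -
    have x0: "0 \<le> ?x" by simp
    have fl: "\<lfloor>?x\<rfloor> \<ge> 0" using x0 by simp
    have e: "real (JJ n) = real_of_int \<lfloor>?x\<rfloor>" unfolding JJ_def using fl by simp
    show "?x - 1 < real (JJ n)" unfolding e by (rule real_of_int_floor_gt_diff_one)
    show "real (JJ n) \<le> ?x" unfolding e by (rule of_int_floor_le)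
  qed
  have Jpos: "real (JJ n) > 0" using Jr(1) x2 by linarith
  then have J1: "JJ n \<ge> 1" by simp
  have Q: "(1 - ?G) ^ ?m \<ge> beta" "(1 - ?H) ^ ?m \<le> beta" using quant_G[OF elim(5)] by auto
  have P: "prob_unif n (\<lambda>x. \<not> q n < real (tribe_max lam n x)) = (1 - ?G) ^ ?m"
    using G1[OF m(1)] by simp
  have H1: "?H \<le> 1" by (rule Ge_le1)
  have GH: "?G \<le> ?H" by (rule Gt_le_Ge)
  have G0: "0 \<le> ?G" by (rule Gt_nonneg)
  have PD: "(1 - ?G) ^ ?m - (1 - ?H) ^ ?m \<le> real ?m * ((1 - ?G) - (1 - ?H))"
    by (rule pow_diff_le) (use H1 GH G0 in linarith)+
  have D: "\<bar>(1 - ?G) ^ ?m - beta\<bar> \<le> real ?m * (?H - ?G)"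
  proof -
    have "real ?m * ((1 - ?G) - (1 - ?H)) = real ?m * (?H - ?G)" by simp
    then show ?thesis using PD Q by linarith
  qed
  have key: "real ?m * (?H - ?G) \<le> 2 * LL / real (JJ n)"
  proof (cases "q n \<in> \<nat>")
    case False
    then have "?H - ?G \<le> 0" using Ge_Gt_diff_le[of ?l "q n"] by simp
    then have "real ?m * (?H - ?G) \<le> 0" by (simp add: mult_nonneg_nonpos)
    also have "0 \<le> 2 * LL / real (JJ n)" using LL_pos Jpos by simp
    finally show ?thesis .
  next
    case True
    define k where "k = nat \<lfloor>q n\<rfloor>"
    have qk: "real k = q n" using True unfolding k_def by (auto elim: Nats_cases)
    have HG: "?H - ?G \<le> bp ?l k" using Ge_Gt_diff_le[of ?l "q n"] True by (simp add: k_def)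
    have t0: "tt n \<ge> 0" using elim(1) by (simp add: tt_def)
    have ts: "tt n \<le> ?S"
    proof (rule real_le_rsqrt)
      have "(tt n)\<^sup>2 \<le> real ?l / 2 * ln (real n / c0)" by (rule E2[OF elim(5) elim(1)])
      also have "\<dots> \<le> real n powr lam * ln (real n / c0)"
      proof (rule mult_right_mono)
        show "real ?l / 2 \<le> real n powr lam" using l(2) by simp
        show "0 \<le> ln (real n / c0)" by (rule elim(4))
      qed
      finally show "(tt n)\<^sup>2 \<le> real n powr lam * ln (real n / c0)" .
    qed
    have cond: "8 * real (JJ n) * ((real k - real ?l / 2) + real (JJ n)) \<le> real ?l"
    proof -
      have "real k - real ?l / 2 = tt n" using qk by (simp add: tt_def)
      then have "8 * real (JJ n) * ((real k - real ?l / 2) + real (JJ n)) = 8 * real (JJ n) * (tt n + real (JJ n))"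
        by simp
      also have "\<dots> \<le> 8 * ?x * (?S + ?x)"
      proof (rule mult_mono)
        show "8 * real (JJ n) \<le> 8 * ?x" using Jr(2) by simp
        show "tt n + real (JJ n) \<le> ?S + ?x" using ts Jr(2) by linarith
        show "0 \<le> 8 * ?x" by simp
        show "0 \<le> tt n + real (JJ n)" using t0 by simp
      qed
      also have "\<dots> \<le> real n powr lam - 1" by (rule elim(2))
      also have "\<dots> < real ?l" by (rule l(3))
      finally show ?thesis by simp
    qed
    have kl: "real ?l / 2 \<le> real k" using elim(1) qk by simp
    have bpk: "bp ?l k \<le> 2 * ?G / real (JJ n)"
      using GA[OF J1 kl cond] qk by simp
    have "real ?m * (?H - ?G) \<le> real ?m * (2 * ?G / real (JJ n))"
      using HG bpk by (intro mult_left_mono) auto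
    also have "\<dots> = 2 * (real ?m * ?G) / real (JJ n)" by simp
    also have "\<dots> \<le> 2 * LL / real (JJ n)"
    proof (rule divide_right_mono)
      show "2 * (real ?m * ?G) \<le> 2 * LL" using F1[OF elim(5)] by simp
    qed (use Jpos in simp)
    finally show ?thesis .
  qed
  also have "2 * LL / real (JJ n) \<le> 2 * LL / (?x - 1)"
  proof (rule divide_left_mono)
    show "?x - 1 \<le> real (JJ n)" using Jr(1) by simp
    show "0 \<le> 2 * LL" using LL_pos by simp
    show "0 < real (JJ n) * (?x - 1)" using Jpos x2 by simp
  qed
  finally show ?case using D P by simp
qed

theorem part2: "(\<lambda>n. prob_unif n (\<lambda>x. \<not> q n < real (tribe_max lam n x))) \<longlonglongrightarrow> beta"
proof -
  have "(\<lambda>n. prob_unif n (\<lambda>x. \<not> q n < real (tribe_max lam n x)) - beta) \<longlonglongrightarrow> 0"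
  proof (rule Lim_null_comparison)
    show "\<forall>\<^sub>F n in sequentially. norm (prob_unif n (\<lambda>x. \<not> q n < real (tribe_max lam n x)) - beta)
        \<le> 2 * LL / (real n powr (lam/8) - 1)"
      using P_bound by simp
    show "(\<lambda>n. 2 * LL / (real n powr (lam/8) - 1)) \<longlonglongrightarrow> 0" by (rule A3[OF lam(1)])
  qed
  then show ?thesis by (simp add: LIM_zero_iff)
qed

end

context tribes
begin

lemma exp2: "exp (-2::real) < 1/2"
proof -
  have "1 + 2 \<le> exp (2::real)" by (rule exp_ge_add_one_self)
  then have "exp (2::real) > 2" by simp
  then show ?thesis by (simp add: exp_minus field_simps)
qed

lemma K_inf: "filterlim (\<lambda>n. (tt n)\<^sup>2 / real (lt n)) at_top sequentially"
  unfolding filterlim_at_top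
proof
  fix Z :: real
  define M where "M = max 1 (sqrt \<bar>Z\<bar>)"
  have M1: "M \<ge> 1" unfolding M_def by simp
  have MZ: "M\<^sup>2 \<ge> Z"
  proof -
    have "sqrt \<bar>Z\<bar> \<le> M" unfolding M_def by simp
    then have "(sqrt \<bar>Z\<bar>)\<^sup>2 \<le> M\<^sup>2" by (intro power_mono) auto
    then show ?thesis by simp
  qed
  define cM where "cM = (1/2 - exp (-2)) * exp (- 16 * (M + 1)\<^sup>2)"
  have cM0: "cM > 0" unfolding cM_def using exp2 by simp
  have ev1: "eventually (\<lambda>n. real (mt n) > LL / cM) sequentially"
    using m_inf by (simp add: filterlim_at_top_dense)
  have ev2: "eventually (\<lambda>n. 16 * M * sqrt (real (lt n)) + 12 \<le> real (lt n)) sequentially"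
    using eventually_compose_at_top[OF l_inf A7[of M]] M1 by simp
  show "eventually (\<lambda>n. Z \<le> (tt n)\<^sup>2 / real (lt n)) sequentially"
    using ev1 ev2 E1 eventually_ge_at_top[of 1]
  proof eventually_elim
    case (elim n)
    note l = basic_l[OF elim(4)]
    let ?l = "real (lt n)"
    define u where "u = M * sqrt ?l"
    have l1: "?l \<ge> 1" using l(1) by simp
    have sl: "sqrt ?l \<ge> 1" using l1 by simp
    have u0: "u \<ge> 0" unfolding u_def using M1 by simp
    have tu: "u \<le> tt n"
    proof (rule ccontr)
      assume "\<not> u \<le> tt n"
      then have qu: "q n \<le> ?l / 2 + u" unfolding tt_def by simp
      have ul: "4 * (4 * u + 3) \<le> ?l" using elim(2) unfolding u_def by simp
      have LBv: "Gt (lt n) (?l / 2 + u) \<ge> (1/2 - exp (- 2 * u\<^sup>2 / ?l)) * exp (- 16 * (u + 1)\<^sup>2 / ?l)"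
        by (rule LB[OF l1 u0 ul])
      have u2: "u\<^sup>2 / ?l = M\<^sup>2" unfolding u_def using l1 by (simp add: power_mult_distrib)
      have e1: "exp (- 2 * u\<^sup>2 / ?l) \<le> exp (-2)"
      proof -
        have "M\<^sup>2 \<ge> 1" using M1 by simp
        then have "- 2 * u\<^sup>2 / ?l \<le> -2" using u2 by simp
        then show ?thesis by simp
      qed
      have e2: "exp (- 16 * (M + 1)\<^sup>2) \<le> exp (- 16 * (u + 1)\<^sup>2 / ?l)"
      proof -
        have "u + 1 \<le> (M + 1) * sqrt ?l" unfolding u_def using sl by (simp add: algebra_simps)
        then have "(u + 1)\<^sup>2 \<le> ((M + 1) * sqrt ?l)\<^sup>2" using u0 by (intro power_mono) auto
        also have "\<dots> = (M + 1)\<^sup>2 * ?l" using l1 by (simp add: power_mult_distrib)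
        finally have "(u + 1)\<^sup>2 / ?l \<le> (M + 1)\<^sup>2" using l1 by (simp add: divide_le_eq)
        then show ?thesis by simp
      qed
      have "cM \<le> (1/2 - exp (- 2 * u\<^sup>2 / ?l)) * exp (- 16 * (u + 1)\<^sup>2 / ?l)"
      proof -
        have p1: "1/2 - exp (-2) \<le> 1/2 - exp (- 2 * u\<^sup>2 / ?l)" using e1 by simp
        have p0: "0 \<le> 1/2 - exp (-2::real)" using exp2 by simp
        show ?thesis unfolding cM_def
          by (rule mult_mono[OF p1 e2]) (use p0 p1 in linarith, simp)
      qed
      also have "\<dots> \<le> Gt (lt n) (?l / 2 + u)" by (rule LBv)
      also have "\<dots> \<le> Gt (lt n) (q n)" by (rule Gt_mono[OF qu])
      finally have "cM \<le> Gt (lt n) (q n)" .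
      then have "real (mt n) * cM \<le> real (mt n) * Gt (lt n) (q n)" by (intro mult_left_mono) auto
      also have "\<dots> \<le> LL" by (rule F1[OF elim(4)])
      finally have "real (mt n) \<le> LL / cM" using cM0 by (simp add: le_divide_eq)
      then show False using elim(1) by simp
    qed
    have "u\<^sup>2 \<le> (tt n)\<^sup>2" using tu u0 by (intro power_mono) auto
    then have "M\<^sup>2 * ?l \<le> (tt n)\<^sup>2" unfolding u_def using l1 by (simp add: power_mult_distrib)
    then have "M\<^sup>2 \<le> (tt n)\<^sup>2 / ?l" using l1 by (simp add: le_divide_eq)
    then show ?case using MZ by simp
  qed
qed

end

context tribes
begin

lemma NS_bound:
  assumes eps: "0 < eps" "eps < 1"
  shows "eventually (\<lambda>n. \<bar>noise_corr n eps (\<lambda>x. q n < real (tribe_max lam n x)) -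
      (expect_unif n (\<lambda>x. of_bool (q n < real (tribe_max lam n x))))\<^sup>2\<bar>
    \<le> LL * exp (1 - eps * ((tt n)\<^sup>2 / real (lt n)) / 2) + LL / (eps\<^sup>2 * ((tt n)\<^sup>2 / real (lt n)))
       + LL\<^sup>2 / real (mt n)) sequentially"
  using E1 tle eventually_ge_at_top[of 1] K_inf[unfolded filterlim_at_top, rule_format, of 1]
proof eventually_elim
  case (elim n)
  note l = basic_l[OF elim(3)] and m = basic_m[OF elim(3)]
  let ?l = "real (lt n)" and ?m = "real (mt n)" and ?G = "Gt (lt n) (q n)"
  define t where "t = tt n"
  define K where "K = t\<^sup>2 / ?l"
  have l1: "?l \<ge> 1" using l(1) by simp
  have mpos: "?m > 0" using m(1) by simp
  have K1: "K \<ge> 1" using elim(4) unfolding K_def t_def by simp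
  have t0: "t \<ge> 0" using elim(1) unfolding t_def tt_def by simp
  have tl: "t \<le> ?l / 2" using elim(2) unfolding t_def by simp
  have tpos: "t > 0"
  proof -
    have "t\<^sup>2 \<ge> ?l" using K1 l1 unfolding K_def by (simp add: le_divide_eq)
    then have "t \<noteq> 0" using l1 by auto
    then show ?thesis using t0 by simp
  qed
  have qt: "q n = ?l / 2 + t" unfolding t_def tt_def by simp
  define D where "D = nat \<lfloor>eps * t / 2\<rfloor>"
  define T where "T = eps * t / 2"
  have et0: "eps * t / 2 \<ge> 0" using eps t0 by simp
  have Dr: "real D = real_of_int \<lfloor>eps * t / 2\<rfloor>" unfolding D_def using et0 by simp
  have D1: "real D \<le> eps * t / 2" unfolding Dr by (rule of_int_floor_le)
  have D2: "eps * t / 2 - 1 < real D" unfolding Dr by (rule real_of_int_floor_gt_diff_one)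
  have T0: "T > 0" unfolding T_def using eps tpos by simp
  have TD: "T \<le> eps * (q n - real (card (Blk (lt n) j)) / 2) - (1 - eps) * real D" for j
  proof -
    have "(1 - eps) * real D \<le> 1 * real D" using eps by (intro mult_right_mono) auto
    then show ?thesis unfolding card_Blk T_def qt using D1 by simp
  qed
  have G0: "0 \<le> ?G" by (rule Gt_nonneg)
  have G1': "?G \<le> 1" by (rule Gt_le1)
  have mG: "?m * ?G \<le> LL" by (rule F1[OF elim(3)])
  define Bd where "Bd = Gt (lt n) (q n + real D) + ?G * ?l / (4 * T\<^sup>2) + ?G\<^sup>2"
  have eachB: "\<bar>cj lam n (q n) eps j - (1 - ?G)\<^sup>2\<bar> \<le> Bd" for j
  proof -
    have c: "cj lam n (q n) eps j - (1 - ?G)\<^sup>2 = eB eps (Blk (lt n) j) (q n) - ?G\<^sup>2"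
      using cj_eq[of lam n "q n" eps j] m(1) by (simp add: power2_eq_square algebra_simps)
    have e0: "eB eps (Blk (lt n) j) (q n) \<ge> 0" using eps by (intro eB_nonneg) auto
    have eb: "eB eps (Blk (lt n) j) (q n) \<le> Gt (lt n) (q n + real D) + ?G * ?l / (4 * T\<^sup>2)"
      using eB_bound[OF finite_Blk eps T0 TD[of j]] by (simp add: card_Blk)
    have "\<bar>eB eps (Blk (lt n) j) (q n) - ?G\<^sup>2\<bar> \<le> eB eps (Blk (lt n) j) (q n) + ?G\<^sup>2"
      using e0 by (simp add: abs_le_iff)
    then show ?thesis unfolding c Bd_def using eb by linarith
  qed
  have NS: "noise_corr n eps (\<lambda>x. q n < real (tribe_max lam n x)) -
      (expect_unif n (\<lambda>x. of_bool (q n < real (tribe_max lam n x))))\<^sup>2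
      = (\<Prod>j<mt n. cj lam n (q n) eps j) - (\<Prod>j<mt n. (1 - ?G)\<^sup>2)"
    by (rule G3[OF m(1)])
  have "\<bar>(\<Prod>j<mt n. cj lam n (q n) eps j) - (\<Prod>j<mt n. (1 - ?G)\<^sup>2)\<bar>
      \<le> (\<Sum>j<mt n. \<bar>cj lam n (q n) eps j - (1 - ?G)\<^sup>2\<bar>)"
  proof (rule prod_diff_le)
    fix j show "0 \<le> cj lam n (q n) eps j \<and> cj lam n (q n) eps j \<le> 1"
      using cj_range[of lam n eps "q n" j] eps m(1) by simp
    have "0 \<le> 1 - ?G" "1 - ?G \<le> 1" using G0 G1' by auto
    then show "0 \<le> (1 - ?G)\<^sup>2 \<and> (1 - ?G)\<^sup>2 \<le> 1" by (simp add: power_le_one)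
  qed
  also have "\<dots> \<le> (\<Sum>j<mt n. Bd)" by (intro sum_mono eachB)
  also have "\<dots> = ?m * Bd" by simp
  also have "?m * Bd = ?m * Gt (lt n) (q n + real D) + (?m * ?G) * ?l / (4 * T\<^sup>2) + (?m * ?G) * ?G"
    unfolding Bd_def by (simp add: algebra_simps power2_eq_square)
  also have "\<dots> \<le> LL * exp (1 - eps * K / 2) + LL / (eps\<^sup>2 * K) + LL\<^sup>2 / ?m"
  proof (intro add_mono)
    have gb: "Gt (lt n) (q n + real D) \<le> exp (- (q n - ?l / 2) * real D / ?l) * ?G"
      by (rule GB) (use l1 qt t0 tl in auto)
    have ex: "exp (- (q n - ?l / 2) * real D / ?l) \<le> exp (1 - eps * K / 2)"
    proof -
      have "t * (eps * t / 2 - 1) \<le> t * real D" using t0 D2 by (intro mult_left_mono) auto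
      then have "eps * t\<^sup>2 / 2 - t \<le> t * real D" by (simp add: algebra_simps power2_eq_square)
      then have "(eps * t\<^sup>2 / 2 - t) / ?l \<le> t * real D / ?l" using l1 by (intro divide_right_mono) auto
      moreover have "t / ?l \<le> 1" using tl l1 by (simp add: divide_le_eq)
      moreover have "(eps * t\<^sup>2 / 2 - t) / ?l = eps * K / 2 - t / ?l" unfolding K_def using l1
        by (simp add: field_simps)
      ultimately have "- (t * real D / ?l) \<le> 1 - eps * K / 2" by linarith
      then show ?thesis unfolding qt by simp
    qed
    have "?m * Gt (lt n) (q n + real D) \<le> ?m * (exp (1 - eps * K / 2) * ?G)"
      using gb ex G0 mpos by (intro mult_left_mono order_trans[OF gb] mult_right_mono) auto
    also have "\<dots> = exp (1 - eps * K / 2) * (?m * ?G)" by simp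
    also have "\<dots> \<le> exp (1 - eps * K / 2) * LL" using mG by (intro mult_left_mono) auto
    finally show "?m * Gt (lt n) (q n + real D) \<le> LL * exp (1 - eps * K / 2)" by (simp add: mult.commute)
    have T2: "4 * T\<^sup>2 = eps\<^sup>2 * t\<^sup>2" unfolding T_def by (simp add: power2_eq_square)
    have "(?m * ?G) * ?l / (4 * T\<^sup>2) \<le> LL * ?l / (4 * T\<^sup>2)"
      using mG l1 T0 by (intro divide_right_mono mult_right_mono) auto
    also have "\<dots> = LL / (eps\<^sup>2 * K)" unfolding T2 K_def using l1 eps tpos by (simp add: field_simps)
    finally show "(?m * ?G) * ?l / (4 * T\<^sup>2) \<le> LL / (eps\<^sup>2 * K)" .
    have "?G \<le> LL / ?m" using mG mpos by (simp add: le_divide_eq mult.commute)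
    then have "(?m * ?G) * ?G \<le> LL * (LL / ?m)" using mG G0 LL_pos by (intro mult_mono) auto
    then show "(?m * ?G) * ?G \<le> LL\<^sup>2 / ?m" by (simp add: power2_eq_square)
  qed
  finally show ?case unfolding NS K_def t_def .
qed

theorem part1: "noise_sensitive (\<lambda>n x. real (tribe_max lam n x) > q n)"
  unfolding noise_sensitive_def
proof (intro allI impI)
  fix eps :: real assume e: "0 < eps \<and> eps < 1"
  let ?g = "\<lambda>n. LL * exp (1 - eps * ((tt n)\<^sup>2 / real (lt n)) / 2) + LL / (eps\<^sup>2 * ((tt n)\<^sup>2 / real (lt n)))
       + LL\<^sup>2 / real (mt n)"
  have g0: "?g \<longlonglongrightarrow> 0"
  proof -
    have a: "(\<lambda>n. LL * exp (1 - eps * ((tt n)\<^sup>2 / real (lt n)) / 2) + LL / (eps\<^sup>2 * ((tt n)\<^sup>2 / real (lt n)))) \<longlonglongrightarrow> 0"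
      using filterlim_compose[OF A6[of eps LL] K_inf] e by simp
    have b: "(\<lambda>n. LL\<^sup>2 / real (mt n)) \<longlonglongrightarrow> 0"
      by (rule tendsto_divide_0[OF tendsto_const filterlim_at_top_imp_at_infinity[OF m_inf]])
    show ?thesis using tendsto_add[OF a b] by simp
  qed
  show "(\<lambda>n. noise_corr n eps (\<lambda>x. real (tribe_max lam n x) > q n) -
      (expect_unif n (\<lambda>x. of_bool (real (tribe_max lam n x) > q n)))\<^sup>2) \<longlonglongrightarrow> 0"
  proof (rule Lim_null_comparison[OF _ g0])
    show "\<forall>\<^sub>F n in sequentially. norm (noise_corr n eps (\<lambda>x. real (tribe_max lam n x) > q n) -
      (expect_unif n (\<lambda>x. of_bool (real (tribe_max lam n x) > q n)))\<^sup>2) \<le> ?g n"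
      using NS_bound[of eps] e by simp
  qed
qed

end

theorem proposition2p1:
  fixes lam beta :: real and q :: "nat \<Rightarrow> real"
  assumes "0 < lam" "lam < 1" "0 < beta" "beta < 1"
    and "\<forall>n. is_quantile n (tribe_max lam n) beta (q n)"
  shows "noise_sensitive (\<lambda>n x. real (tribe_max lam n x) > q n)
       \<and> (\<lambda>n. prob_unif n (\<lambda>x. \<not> (real (tribe_max lam n x) > q n))) \<longlonglongrightarrow> beta"
proof -
  interpret tribes lam beta q
    using assms by unfold_locales auto
  show ?thesis using part1 part2 by simp
qed

end
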